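(* Let $k$ be a field of characteristic $p>0$, let $d_1,\ldots,d_n$ be positive integers, let $A = k[x_1,\ldots,x_n]/(x_1^{d_1}, \ldots, x_n^{d_n})$ and $t = \sum_{i = 1}^n (d_i-1)$. If $m\ge 0$ is an integer with $\max(p,d_1, \ldots, d_n)>(t+m)/2$, then for each $i\ge 0$ the map $A_i \to A_{i+m}$ given by $f \mapsto f \cdot (x_1 + \dots + x_n)^m$ has maximal rank.
   Context: $A$ is graded by degree, $A=\bigoplus_{i\ge 0}A_i$, with $A_i$ the image of the homogeneous polynomials of degree $i$. A linear map has maximal rank if it is injective or surjective. *)

theory Defs
  imports "HOL-Library.Poly_Mapping" "HOL-Computational_Algebra.Computational_Algebra"
begin

text \<open>Variables x_1..x_n of the paper
  are x_0..x_(n-1) here.\<close>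

type_synonym 'k mpoly = "(nat \<Rightarrow>\<^sub>0 nat) \<Rightarrow>\<^sub>0 'k"

definition var :: "nat \<Rightarrow> 'k::comm_ring_1 mpoly" where
  "var j = Poly_Mapping.single (Poly_Mapping.single j 1) 1"

definition mon_deg :: "(nat \<Rightarrow>\<^sub>0 nat) \<Rightarrow> nat" where
  "mon_deg a = sum (Poly_Mapping.lookup a) (Poly_Mapping.keys a)"

definition std_mon :: "(nat \<Rightarrow> nat) \<Rightarrow> nat \<Rightarrow> (nat \<Rightarrow>\<^sub>0 nat) \<Rightarrow> bool" where
  "std_mon d n a \<longleftrightarrow> Poly_Mapping.keys a \<subseteq> {..<n} \<and> (\<forall>j<n. Poly_Mapping.lookup a j < d j)"

text \<open>Normal form modulo the monomial ideal (x_j^(d j)): drop non-standard monomials.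
  A is identified with the span of the standard monomials, with product
  reduce (f * g).\<close>
definition reduce :: "(nat \<Rightarrow> nat) \<Rightarrow> nat \<Rightarrow> 'k::comm_ring_1 mpoly \<Rightarrow> 'k mpoly" where
  "reduce d n f = Poly_Mapping.mapp (\<lambda>a c. if std_mon d n a then c else 0) f"

definition graded_piece :: "(nat \<Rightarrow> nat) \<Rightarrow> nat \<Rightarrow> nat \<Rightarrow> 'k::comm_ring_1 mpoly set" where
  "graded_piece d n i = {f. \<forall>a\<in>Poly_Mapping.keys f. std_mon d n a \<and> mon_deg a = i}"

definition lin_form :: "nat \<Rightarrow> 'k::comm_ring_1 mpoly" where
  "lin_form n = (\<Sum>j<n. var j)"

definition mult_map :: "(nat \<Rightarrow> nat) \<Rightarrow> nat \<Rightarrow> nat \<Rightarrow> 'k::comm_ring_1 mpoly \<Rightarrow> 'k mpoly" where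
  "mult_map d n m f = reduce d n (f * lin_form n ^ m)"

definition maximal_rank :: "('a \<Rightarrow> 'b) \<Rightarrow> 'a set \<Rightarrow> 'b set \<Rightarrow> bool" where
  "maximal_rank \<phi> V W \<longleftrightarrow> inj_on \<phi> V \<or> \<phi> ` V = W"

end

theory Submission
  imports Defs
begin


abbreviation "lookup \<equiv> Poly_Mapping.lookup"
abbreviation "keys \<equiv> Poly_Mapping.keys"

definition sc :: "'k::comm_ring_1 \<Rightarrow> 'k mpoly \<Rightarrow> 'k mpoly" where
  "sc c f = Poly_Mapping.map ((*) c) f"

lemma lookup_sc[simp]: "lookup (sc c f) a = c * lookup f a"
  unfolding sc_def by transfer (simp add: when_def)

definition le_cw :: "(nat \<Rightarrow>\<^sub>0 nat) \<Rightarrow> (nat \<Rightarrow>\<^sub>0 nat) \<Rightarrow> bool" where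
  "le_cw a b \<longleftrightarrow> (\<forall>j. lookup a j \<le> lookup b j)"

lemma sum_singles: "f = (\<Sum>a\<in>keys f. Poly_Mapping.single a (lookup f a))"
proof (rule poly_mapping_eqI)
  fix k
  have "lookup (\<Sum>a\<in>keys f. Poly_Mapping.single a (lookup f a)) k
      = (\<Sum>a\<in>keys f. if a = k then lookup f a else 0)"
    by (simp add: lookup_sum lookup_single when_def)
  also have "\<dots> = lookup f k" 
    by (simp add: sum.delta' in_keys_iff)
  finally show "lookup f k = lookup (\<Sum>a\<in>keys f. Poly_Mapping.single a (lookup f a)) k" by simp
qed

lemma add_eq_iff_cw: "(b = a + e) \<longleftrightarrow> (le_cw a b \<and> e = b - a)" for a b e :: "nat \<Rightarrow>\<^sub>0 nat"
  unfolding le_cw_def poly_mapping_eq_iff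
  by (auto simp: fun_eq_iff lookup_add lookup_minus)

lemma lookup_single_mult: "lookup (Poly_Mapping.single a c * h) b = (if le_cw a b then c * lookup h (b - a) else 0)"
  for h :: "'k::comm_ring_1 mpoly"
proof -
  have "Poly_Mapping.single a c * h = (\<Sum>e\<in>keys h. Poly_Mapping.single a c * Poly_Mapping.single e (lookup h e))"
    by (subst sum_singles[of h]) (simp add: sum_distrib_left)
  also have "\<dots> = (\<Sum>e\<in>keys h. Poly_Mapping.single (a + e) (c * lookup h e))"
    by (simp add: mult_single)
  finally have "lookup (Poly_Mapping.single a c * h) b = (\<Sum>e\<in>keys h. if b = a + e then c * lookup h e else 0)"
    by (simp add: lookup_sum lookup_single when_def eq_commute)
  also have "\<dots> = (\<Sum>e\<in>keys h. if e = b - a then (if le_cw a b then c * lookup h e else 0) else 0)"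
    by (rule sum.cong) (auto simp: add_eq_iff_cw)
  also have "\<dots> = (if le_cw a b then c * lookup h (b - a) else 0)"
    by (simp add: sum.delta in_keys_iff)
  finally show ?thesis .
qed

lemma lookup_mult_sum: "lookup (g * h) b = (\<Sum>a\<in>keys g. lookup g a * (if le_cw a b then lookup h (b - a) else 0))"
  for g h :: "'k::comm_ring_1 mpoly"
proof -
  have "g * h = (\<Sum>a\<in>keys g. Poly_Mapping.single a (lookup g a) * h)"
    by (subst sum_singles[of g]) (simp add: sum_distrib_right)
  then show ?thesis
    by (auto simp: lookup_sum lookup_single_mult intro!: sum.cong)
qed


lemma sc_0[simp]: "sc 0 f = 0" by (rule poly_mapping_eqI) simp
lemma sc_1[simp]: "sc 1 f = f" by (rule poly_mapping_eqI) simp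
lemma sc_zero[simp]: "sc c 0 = 0" by (rule poly_mapping_eqI) simp
lemma sc_add: "sc c (f + g) = sc c f + sc c g" by (rule poly_mapping_eqI) (simp add: lookup_add algebra_simps)
lemma sc_diff: "sc c (f - g) = sc c f - sc c g" for c :: "'k::comm_ring_1"
  by (rule poly_mapping_eqI) (simp add: lookup_minus algebra_simps)
lemma sc_add_left: "sc (a + b) f = sc a f + sc b f" by (rule poly_mapping_eqI) (simp add: lookup_add algebra_simps)
lemma sc_sc[simp]: "sc a (sc b f) = sc (a * b) f" by (rule poly_mapping_eqI) (simp add: algebra_simps)
lemma sc_minus: "sc (- a) f = - sc a f" for a :: "'k::comm_ring_1" by (rule poly_mapping_eqI) simp
lemma sc_eq_0_iff: "sc c f = 0 \<longleftrightarrow> c = 0 \<or> f = 0" for c :: "'k::field"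
  by (auto simp: poly_mapping_eq_iff fun_eq_iff)

lemma mon_deg_alt: "finite S \<Longrightarrow> keys a \<subseteq> S \<Longrightarrow> mon_deg a = (\<Sum>j\<in>S. lookup a j)"
  unfolding mon_deg_def by (rule sum.mono_neutral_left) (auto simp: in_keys_iff)

lemma mon_deg_add[simp]: "mon_deg (a + b) = mon_deg a + mon_deg b"
proof -
  let ?S = "keys a \<union> keys b"
  have "keys (a + b) \<subseteq> ?S" by (rule keys_add)
  then show ?thesis
    by (simp add: mon_deg_alt[of ?S] lookup_add sum.distrib)
qed

lemma mon_deg_single[simp]: "mon_deg (Poly_Mapping.single j k) = k"
  by (simp add: mon_deg_def)

lemma mon_deg_zero[simp]: "mon_deg 0 = 0" by (simp add: mon_deg_def)

lemma le_cw_diff: "le_cw a b \<Longrightarrow> b = a + (b - a)" for a b :: "nat \<Rightarrow>\<^sub>0 nat"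
  using add_eq_iff_cw by blast

lemma mon_deg_diff: "le_cw a b \<Longrightarrow> mon_deg (b - a) = mon_deg b - mon_deg a"
  using mon_deg_add[of a "b - a"] le_cw_diff[of a b] by simp

lemma lookup_reduce: "lookup (reduce d n f) a = (if std_mon d n a then lookup f a else 0)"
  unfolding reduce_def by (auto simp: lookup_mapp in_keys_iff when_def)

lemma gp_iff: "f \<in> graded_piece d n i \<longleftrightarrow> (\<forall>a. lookup f a \<noteq> 0 \<longrightarrow> std_mon d n a \<and> mon_deg a = i)"
  unfolding graded_piece_def by (auto simp: in_keys_iff)

lemma gp_zero[simp]: "0 \<in> graded_piece d n i" by (simp add: gp_iff)
lemma gp_add: "f \<in> graded_piece d n i \<Longrightarrow> g \<in> graded_piece d n i \<Longrightarrow> f + g \<in> graded_piece d n i"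
  unfolding gp_iff lookup_add by (metis add.right_neutral add_0)
lemma gp_diff: "f \<in> graded_piece d n i \<Longrightarrow> g \<in> graded_piece d n i \<Longrightarrow> f - g \<in> graded_piece d n i"
  unfolding gp_iff lookup_minus by (metis diff_zero diff_self)
lemma gp_sc: "f \<in> graded_piece d n i \<Longrightarrow> sc c f \<in> graded_piece d n i"
  by (simp add: gp_iff) (metis mult_zero_right)
lemma gp_single: "std_mon d n a \<Longrightarrow> mon_deg a = i \<Longrightarrow> Poly_Mapping.single a c \<in> graded_piece d n i"
  by (auto simp: gp_iff lookup_single when_def)

lemma lookup_var: "lookup (var j) e = (if e = Poly_Mapping.single j 1 then 1 else 0)"
  by (simp add: var_def lookup_single when_def eq_commute)

lemma le_cw_single: "le_cw (Poly_Mapping.single j 1) b \<longleftrightarrow> 0 < lookup b j"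
  by (auto simp: le_cw_def lookup_single when_def)

lemma lookup_mult_var: "lookup (f * var j) b = (if 0 < lookup b j then lookup f (b - Poly_Mapping.single j 1) else 0)"
  for f :: "'k::comm_ring_1 mpoly"
proof -
  have "f * var j = Poly_Mapping.single (Poly_Mapping.single j 1) 1 * f"
    by (simp add: var_def mult.commute)
  then show ?thesis by (simp only: lookup_single_mult le_cw_single) simp
qed

lemma lookup_mult_lin: "lookup (f * lin_form n) b =
   (\<Sum>j<n. if 0 < lookup b j then lookup f (b - Poly_Mapping.single j 1) else 0)"
  for f :: "'k::comm_ring_1 mpoly"
  by (simp add: lin_form_def sum_distrib_left lookup_sum lookup_mult_var)

lemma std_mon_sub1: "std_mon d n b \<Longrightarrow> std_mon d n (b - Poly_Mapping.single j 1)"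
proof -
  assume "std_mon d n b"
  moreover have "lookup (b - Poly_Mapping.single j 1) i \<le> lookup b i" for i
    by (simp add: lookup_minus)
  ultimately show ?thesis unfolding std_mon_def
    by (metis (no_types, lifting) in_keys_iff le_less_trans le_zero_eq subset_iff)
qed


definition lam :: "(nat \<Rightarrow> nat) \<Rightarrow> nat \<Rightarrow> 'k::comm_ring_1 mpoly \<Rightarrow> 'k mpoly" where
  "lam d n f = mult_map d n 1 f"

lemma lookup_lam: "lookup (lam d n f) b = (if std_mon d n b then
   (\<Sum>j<n. if 0 < lookup b j then lookup f (b - Poly_Mapping.single j 1) else 0) else 0)"
  by (simp add: lam_def mult_map_def lookup_reduce lookup_mult_lin)

lemma mult_map_Suc: "mult_map d n (Suc m) f = lam d n (mult_map d n m f)"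
  for f :: "'k::comm_ring_1 mpoly"
proof (rule poly_mapping_eqI)
  fix b
  have e: "f * lin_form n ^ Suc m = (f * lin_form n ^ m) * lin_form n"
    by (simp only: power_Suc mult_ac)
  show "lookup (mult_map d n (Suc m) f) b = lookup (lam d n (mult_map d n m f)) b"
  proof (cases "std_mon d n b")
    case True
    have "lookup (mult_map d n (Suc m) f) b = lookup ((f * lin_form n ^ m) * lin_form n) b"
      unfolding mult_map_def lookup_reduce e using True by simp
    also have "\<dots> = (\<Sum>j<n. if 0 < lookup b j then lookup (f * lin_form n ^ m) (b - Poly_Mapping.single j 1) else 0)"
      by (rule lookup_mult_lin)
    also have "\<dots> = (\<Sum>j<n. if 0 < lookup b j then lookup (mult_map d n m f) (b - Poly_Mapping.single j 1) else 0)"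
      unfolding mult_map_def lookup_reduce using std_mon_sub1[OF True] by (intro sum.cong refl) presburger
    also have "\<dots> = lookup (lam d n (mult_map d n m f)) b"
      unfolding lookup_lam using True by simp
    finally show ?thesis .
  next
    case False
    then show ?thesis by (simp add: lookup_lam mult_map_def lookup_reduce)
  qed
qed

lemma mult_map_0: "f \<in> graded_piece d n i \<Longrightarrow> mult_map d n 0 f = f"
  by (rule poly_mapping_eqI) (auto simp: mult_map_def lookup_reduce gp_iff)

lemma mult_map_pow: "f \<in> graded_piece d n i \<Longrightarrow> mult_map d n m f = (lam d n ^^ m) f"
  by (induction m) (auto simp: mult_map_0 mult_map_Suc)


lemma lam_add: "lam d n (f + g) = lam d n f + lam d n g"
proof (rule poly_mapping_eqI)
  fix b
  show "lookup (lam d n (f + g)) b = lookup (lam d n f + lam d n g) b"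
    unfolding lookup_add lookup_lam
    by (auto simp: lookup_add sum.distrib[symmetric] intro!: sum.cong)
qed

lemma lam_sc: "lam d n (sc c f) = sc c (lam d n f)"
proof (rule poly_mapping_eqI)
  fix b
  show "lookup (lam d n (sc c f)) b = lookup (sc c (lam d n f)) b"
    unfolding lookup_sc lookup_lam
    by (auto simp: sum_distrib_left intro!: sum.cong)
qed

lemma lam_zero[simp]: "lam d n 0 = 0"
  by (rule poly_mapping_eqI) (simp add: lookup_lam cong: if_cong)

lemma lam_diff: "lam d n (f - g) = lam d n f - lam d n g"
  for f :: "'k::comm_ring_1 mpoly"
  using lam_add[of d n "f - g" g] by (simp add: eq_diff_eq)

lemma lam_pow_add: "(lam d n ^^ m) (f + g) = (lam d n ^^ m) f + (lam d n ^^ m) g"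
  by (induction m) (auto simp: lam_add)
lemma lam_pow_sc: "(lam d n ^^ m) (sc c f) = sc c ((lam d n ^^ m) f)"
  by (induction m) (auto simp: lam_sc)
lemma lam_pow_zero[simp]: "(lam d n ^^ m) 0 = 0"
  by (induction m) auto
lemma lam_pow_diff: "(lam d n ^^ m) (f - g) = (lam d n ^^ m) f - (lam d n ^^ m) g"
  for f :: "'k::comm_ring_1 mpoly"
  using lam_pow_add[of m d n "f - g" g] by (simp add: eq_diff_eq)

lemma mon_deg_sub1: "0 < lookup b j \<Longrightarrow> mon_deg (b - Poly_Mapping.single j 1) = mon_deg b - 1"
  using mon_deg_diff[of "Poly_Mapping.single j 1" b] le_cw_single[of j b] by simp

lemma lam_gp: "f \<in> graded_piece d n i \<Longrightarrow> lam d n f \<in> graded_piece d n (Suc i)"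
proof (unfold gp_iff, intro allI impI)
  fix b assume f: "\<forall>a. lookup f a \<noteq> 0 \<longrightarrow> std_mon d n a \<and> mon_deg a = i"
    and nz: "lookup (lam d n f) b \<noteq> 0"
  then have sb: "std_mon d n b" by (auto simp: lookup_lam split: if_splits)
  from nz sb have "(\<Sum>j<n. if 0 < lookup b j then lookup f (b - Poly_Mapping.single j 1) else 0) \<noteq> 0"
    by (simp add: lookup_lam)
  then obtain j where "j < n" "0 < lookup b j" "lookup f (b - Poly_Mapping.single j 1) \<noteq> 0"
    by (smt (verit, ccfv_threshold) lessThan_iff sum.neutral)
  moreover have "mon_deg b = 1 + mon_deg (b - Poly_Mapping.single j 1)"
    by (metis \<open>0 < lookup b j\<close> le_cw_diff mon_deg_add mon_deg_single le_cw_single)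
  ultimately have "mon_deg b - 1 = i" "1 \<le> mon_deg b"
    using f by auto
  then show "std_mon d n b \<and> mon_deg b = Suc i" using sb by simp
qed

lemma lam_pow_gp: "f \<in> graded_piece d n i \<Longrightarrow> (lam d n ^^ m) f \<in> graded_piece d n (i + m)"
  by (induction m) (auto simp: lam_gp)

lemma mult_map_gp: "f \<in> graded_piece d n i \<Longrightarrow> mult_map d n m f \<in> graded_piece d n (i + m)"
  by (simp add: mult_map_pow lam_pow_gp)


lemma of_nat_neq_CHAR:
  assumes "j < CHAR('k::comm_ring_1)" "j0 < CHAR('k)" "j \<noteq> j0"
  shows "(of_nat j :: 'k) \<noteq> of_nat j0"
proof
  assume e: "(of_nat j :: 'k) = of_nat j0"
  {
    fix a b :: nat assume ab: "a < b" "b < CHAR('k)" "(of_nat a :: 'k) = of_nat b"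
    have "(of_nat b :: 'k) = of_nat a + of_nat (b - a)"
      using ab(1) by (simp flip: of_nat_add)
    then have "(of_nat (b - a) :: 'k) = 0" using ab(3) by simp
    then have "CHAR('k) dvd (b - a)" by (simp add: of_nat_eq_0_iff_char_dvd)
    then have "CHAR('k) \<le> b - a" using ab(1) by (intro dvd_imp_le) auto
    with ab(2) have False by linarith
  }
  from this[of j j0] this[of j0 j] assms e show False by (cases "j < j0") auto
qed

lemma dvd_pderiv_pow:
  fixes r :: "'k::field poly"
  assumes "r ^ Suc m dvd g" shows "r ^ m dvd pderiv g"
proof -
  from assms obtain h where g: "g = r ^ Suc m * h" by (auto elim: dvdE)
  have "pderiv g = r ^ Suc m * pderiv h + h * (smult (of_nat (Suc m)) (r ^ m) * pderiv r)"
    unfolding g by (simp only: pderiv_mult pderiv_power_Suc)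
  also have "\<dots> = r ^ m * (smult (of_nat (Suc m)) (pderiv r * h) + r * pderiv h)"
    by (simp only: power_Suc algebra_simps mult_smult_left mult_smult_right)
  finally show ?thesis by simp
qed

lemma gap_lemma:
  fixes \<gamma> :: "'k::field poly"
  assumes "finite J" "card J \<le> m" "\<forall>j\<in>J. j < CHAR('k)"
    "\<forall>j. coeff \<gamma> j \<noteq> 0 \<longrightarrow> j \<in> J" "[:1,1:] ^ m dvd \<gamma>"
  shows "\<gamma> = 0"
  using assms
proof (induction m arbitrary: \<gamma> J)
  case 0
  then have "J = {}" by simp
  with 0 show ?case by (metis empty_iff leading_coeff_0_iff)
next
  case (Suc m)
  show ?case
  proof (cases "J = {}")
    case True
    with Suc.prems show ?thesis by (metis empty_iff leading_coeff_0_iff)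
  next
    case False
    then obtain j0 where j0: "j0 \<in> J" by auto
    define q where "q = pCons 0 (pderiv \<gamma>) - smult (of_nat j0) \<gamma>"
    have cq: "coeff q j = (of_nat j - of_nat j0) * coeff \<gamma> j" for j
    proof (cases j)
      case 0 then show ?thesis by (simp add: q_def)
    next
      case (Suc k) then show ?thesis
        by (simp add: q_def coeff_pderiv algebra_simps)
    qed
    have "[:1,1:] ^ m dvd pCons 0 (pderiv \<gamma>)"
    proof -
      have "pCons 0 (pderiv \<gamma>) = [:0,1:] * pderiv \<gamma>" by simp
      then show ?thesis using dvd_pderiv_pow[OF Suc.prems(5)] by (metis dvd_mult)
    qed
    moreover have "[:1,1:] ^ m dvd smult (of_nat j0) \<gamma>"
    proof (rule dvd_smult)
      have "[:1,1:] ^ m dvd ([:1,1::'k:] ^ Suc m)" by (rule le_imp_power_dvd) simp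
      then show "[:1,1:] ^ m dvd \<gamma>" using Suc.prems(5) by (rule dvd_trans)
    qed
    ultimately have dq: "[:1,1:] ^ m dvd q" unfolding q_def by (rule dvd_diff)
    have "\<forall>j. coeff q j \<noteq> 0 \<longrightarrow> j \<in> J - {j0}"
      using Suc.prems(4) by (auto simp: cq)
    moreover have "card (J - {j0}) \<le> m" using Suc.prems(1,2) j0 by simp
    ultimately have "q = 0" using Suc.IH[of "J - {j0}" q] Suc.prems(1,3) dq by auto
    then have z: "coeff \<gamma> j = 0" if "j \<noteq> j0" for j
    proof -
      have "coeff q j = 0" using \<open>q = 0\<close> by simp
      then have "(of_nat j - of_nat j0 :: 'k) = 0 \<or> coeff \<gamma> j = 0" by (simp add: cq)
      moreover have "(of_nat j - of_nat j0 :: 'k) \<noteq> 0" if "coeff \<gamma> j \<noteq> 0"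
        using of_nat_neq_CHAR[of j j0] Suc.prems(3,4) j0 that \<open>j \<noteq> j0\<close> by auto
      ultimately show ?thesis by blast
    qed
    have g: "\<gamma> = monom (coeff \<gamma> j0) j0"
      by (rule poly_eqI) (auto simp: coeff_monom z)
    have "poly \<gamma> (-1) = 0"
    proof -
      from Suc.prems(5) obtain h where "\<gamma> = [:1,1:] ^ Suc m * h" by (auto elim: dvdE)
      then show ?thesis by simp
    qed
    then have "coeff \<gamma> j0 = 0" by (subst (asm) g) (simp add: poly_monom)
    then show ?thesis using g by simp
  qed
qed


definition subsp :: "'k::comm_ring_1 mpoly set \<Rightarrow> bool" where
  "subsp V \<longleftrightarrow> 0 \<in> V \<and> (\<forall>x\<in>V. \<forall>y\<in>V. x + y \<in> V) \<and> (\<forall>c. \<forall>x\<in>V. sc c x \<in> V)"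

lemma subsp_0: "subsp V \<Longrightarrow> 0 \<in> V" by (simp add: subsp_def)
lemma subsp_add: "subsp V \<Longrightarrow> x \<in> V \<Longrightarrow> y \<in> V \<Longrightarrow> x + y \<in> V" by (simp add: subsp_def)
lemma subsp_sc: "subsp V \<Longrightarrow> x \<in> V \<Longrightarrow> sc c x \<in> V" by (simp add: subsp_def)
lemma subsp_uminus: "subsp V \<Longrightarrow> x \<in> V \<Longrightarrow> - x \<in> V"
  using subsp_sc[of V x "-1"] by (simp add: sc_minus)
lemma subsp_diff: "subsp V \<Longrightarrow> x \<in> V \<Longrightarrow> y \<in> V \<Longrightarrow> x - y \<in> V"
  using subsp_add[of V x "- y"] subsp_uminus[of V y] by simp
lemma subsp_sum: assumes "subsp V" "finite A" "\<And>a. a \<in> A \<Longrightarrow> f a \<in> V" shows "sum f A \<in> V"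
  using assms(2,3) by (induction A rule: finite_induct) (auto simp: subsp_0[OF assms(1)] subsp_add[OF assms(1)])

lemma subsp_sc_notin:
  fixes c :: "'k::field"
  shows "subsp V \<Longrightarrow> sc c x \<in> V \<Longrightarrow> x \<notin> V \<Longrightarrow> c = 0"
  using subsp_sc[of V "sc c x" "inverse c"] by (auto simp: field_simps split: if_splits)

lemma coeff_11_mult: "coeff ([:1,1:] * \<gamma>) k = coeff \<gamma> k + (if k = 0 then 0 else coeff \<gamma> (k - 1))"
  for \<gamma> :: "'k::field poly"
  by (cases k) (simp_all add: mult_pCons_left)

lemma card_S_bound:
  fixes a m L D :: nat
  assumes "2*a+m+2 \<le> L + D \<or> a+m < L"
  shows "card ({r. r < D \<and> a+1 \<le> r+L \<and> r+L \<le> a+m} \<union> {r. D \<le> r \<and> r \<le> a+m \<and> r < D+m}) \<le> m"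
proof -
  let ?S1 = "{r. r < D \<and> a+1 \<le> r+L \<and> r+L \<le> a+m}"
  let ?S2 = "{r. D \<le> r \<and> r \<le> a+m \<and> r < D+m}"
  have f1: "finite ?S1" by (rule finite_subset[of _ "{..<D}"]) auto
  have f2: "finite ?S2" by (rule finite_subset[of _ "{..<D+m}"]) auto
  have x1: "card ?S1 \<le> m"
  proof (cases "?S1 = {}")
    case True then show ?thesis by (simp only: card.empty zero_le)
  next
    case False
    then have La: "L \<le> a + m" by auto
    have "?S1 \<subseteq> {a+1-L..a+m-L}" by auto
    then have "card ?S1 \<le> card {a+1-L..a+m-L}" by (rule card_mono[rotated]) simp
    also have "\<dots> = Suc (a+m-L) - (a+1-L)" by simp
    also have "\<dots> \<le> m" using La by (cases "L \<le> a + 1") auto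
    finally show ?thesis .
  qed
  have x2: "card ?S1 + L \<le> a+m+1 \<or> card ?S1 = 0"
  proof (cases "?S1 = {}")
    case True then show ?thesis by simp
  next
    case False
    then have La: "L \<le> a + m" by auto
    have "?S1 \<subseteq> {..a+m-L}" by auto
    then have "card ?S1 \<le> card {..a+m-L}" by (rule card_mono[rotated]) simp
    then have "card ?S1 + L \<le> a+m+1" using La by simp
    then show ?thesis by (rule disjI1)
  qed
  have y1: "card ?S2 \<le> m"
  proof -
    have "?S2 \<subseteq> {D..<D+m}" by auto
    then have "card ?S2 \<le> card {D..<D+m}" by (rule card_mono[rotated]) simp
    then show ?thesis by simp
  qed
  have y2: "card ?S2 + D \<le> a+m+1 \<or> card ?S2 = 0"
  proof (cases "?S2 = {}")
    case True then show ?thesis by simp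
  next
    case False
    then have Da: "D \<le> a + m" by auto
    have "?S2 \<subseteq> {D..a+m}" by auto
    then have "card ?S2 \<le> card {D..a+m}" by (rule card_mono[rotated]) simp
    then have "card ?S2 + D \<le> a+m+1" using Da by simp
    then show ?thesis by (rule disjI1)
  qed
  have x3: "a + m < L \<longrightarrow> card ?S1 = 0" using f1 by auto
  have "card (?S1 \<union> ?S2) \<le> card ?S1 + card ?S2" by (rule card_Un_le)
  also have "\<dots> \<le> m" using x1 x2 y1 y2 x3 assms by linarith
  finally show ?thesis .
qed

locale tens =
  fixes M :: "nat \<Rightarrow> 'k::field mpoly set" and lm :: "'k mpoly \<Rightarrow> 'k mpoly"
    and mons :: "nat \<Rightarrow> 'k mpoly set"
  assumes M_sub: "subsp (M j)"
    and lm_add: "lm (x + y) = lm x + lm y"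
    and lm_sc: "lm (sc c x) = sc c (lm x)"
    and lm_M: "x \<in> M j \<Longrightarrow> lm x \<in> M (Suc j)"
    and mons_fin: "finite (mons j)"
    and mons_M: "mons j \<subseteq> M j"
    and mons_span: "subsp V \<Longrightarrow> mons j \<subseteq> V \<Longrightarrow> M j \<subseteq> V"
begin

lemma lm_zero[simp]: "lm 0 = 0"
  using lm_add[of 0 0] by (metis add_cancel_right_right add_0)

lemma lm_diff: "lm (x - y) = lm x - lm y"
  using lm_add[of "x - y" y] by (simp add: eq_diff_eq)

lemma lmp_add: "(lm ^^ e) (x + y) = (lm ^^ e) x + (lm ^^ e) y"
  by (induction e) (auto simp: lm_add)
lemma lmp_sc: "(lm ^^ e) (sc c x) = sc c ((lm ^^ e) x)"
  by (induction e) (auto simp: lm_sc)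
lemma lmp_zero[simp]: "(lm ^^ e) 0 = 0"
  by (induction e) auto
lemma lmp_diff: "(lm ^^ e) (x - y) = (lm ^^ e) x - (lm ^^ e) y"
  using lmp_add[of e "x - y" y] by (simp add: eq_diff_eq)
lemma lmp_M: "x \<in> M j \<Longrightarrow> (lm ^^ e) x \<in> M (j + e)"
  by (induction e) (auto simp: lm_M)

definition fam :: "nat \<Rightarrow> nat \<Rightarrow> (nat \<Rightarrow> 'k mpoly) \<Rightarrow> bool" where
  "fam D i g \<longleftrightarrow> (\<forall>k. (k \<le> i \<and> k < D \<longrightarrow> g k \<in> M (i - k)) \<and> (\<not> (k \<le> i \<and> k < D) \<longrightarrow> g k = 0))"

definition T :: "nat \<Rightarrow> (nat \<Rightarrow> 'k mpoly) \<Rightarrow> nat \<Rightarrow> 'k mpoly" where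
  "T D g r = (if r < D then lm (g r) + (if r = 0 then 0 else g (r - 1)) else 0)"

definition famW :: "(nat \<Rightarrow> 'k mpoly set) \<Rightarrow> nat \<Rightarrow> (nat \<Rightarrow> 'k mpoly) \<Rightarrow> bool" where
  "famW W i g \<longleftrightarrow> (\<forall>k\<le>i. g k \<in> W (i - k))"

definition goodW :: "(nat \<Rightarrow> 'k mpoly set) \<Rightarrow> bool" where
  "goodW W \<longleftrightarrow> (\<forall>j. subsp (W j) \<and> W j \<subseteq> M j \<and> (\<forall>x\<in>W j. lm x \<in> W (Suc j)))"

definition InjQ :: "(nat \<Rightarrow> 'k mpoly set) \<Rightarrow> nat \<Rightarrow> nat \<Rightarrow> bool" where
  "InjQ W c N \<longleftrightarrow> (\<forall>i m g. g \<in> M i \<longrightarrow> 2 * i + m \<le> c \<longrightarrow> i + m \<le> N \<longrightarrow>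
      (lm ^^ m) g \<in> W (i + m) \<longrightarrow> g \<in> W i)"

lemma T_add: "T D (\<lambda>k. g k + h k) = (\<lambda>k. T D g k + T D h k)"
  by (auto simp: T_def lm_add fun_eq_iff)

lemma Tp_add: "(T D ^^ m) (\<lambda>k. g k + h k) = (\<lambda>k. (T D ^^ m) g k + (T D ^^ m) h k)"
proof (induction m)
  case 0 then show ?case by simp
next
  case (Suc m) then show ?case by (simp add: T_add)
qed

lemma fam_T: assumes "fam D i g" shows "fam D (Suc i) (T D g)"
  unfolding fam_def
proof (intro allI conjI impI)
  fix k assume k: "k \<le> Suc i \<and> k < D"
  have a: "lm (g k) \<in> M (Suc i - k)"
  proof (cases "k \<le> i")
    case True
    with assms k have "g k \<in> M (i - k)" by (simp add: fam_def)
    then show ?thesis using True by (metis Suc_diff_le lm_M)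
  next
    case False
    with assms have "g k = 0" by (simp add: fam_def)
    then show ?thesis by (simp add: subsp_0 M_sub)
  qed
  have b: "(if k = 0 then 0 else g (k - 1)) \<in> M (Suc i - k)"
  proof (cases "k = 0")
    case True then show ?thesis by (simp add: subsp_0 M_sub)
  next
    case False
    have c: "k - 1 \<le> i" "k - 1 < D" using k False by auto
    then have "g (k - 1) \<in> M (i - (k - 1))" using assms unfolding fam_def by blast
    moreover have "i - (k - 1) = Suc i - k" using False k by simp
    ultimately show ?thesis using False by simp
  qed
  show "T D g k \<in> M (Suc i - k)"
    using k a b by (simp add: T_def subsp_add M_sub)
next
  fix k assume k: "\<not> (k \<le> Suc i \<and> k < D)"
  show "T D g k = 0"
  proof (cases "k < D")
    case True
    with k have "Suc i < k" by simp
    with assms True show ?thesis by (simp add: T_def fam_def)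
  next
    case False then show ?thesis by (simp add: T_def)
  qed
qed

lemma fam_Tp: "fam D i g \<Longrightarrow> fam D (i + m) ((T D ^^ m) g)"
  by (induction m) (auto simp: fam_T)


lemma W_lmp: "goodW W \<Longrightarrow> x \<in> W j \<Longrightarrow> (lm ^^ e) x \<in> W (j + e)"
  by (induction e) (auto simp: goodW_def)

lemma famW_T:
  assumes "goodW W" "famW W i u" "\<forall>k>i. u k = 0"
  shows "famW W (Suc i) (T D u) \<and> (\<forall>k>Suc i. T D u k = 0)"
proof
  have sW: "subsp (W j)" for j using assms(1) by (simp add: goodW_def)
  show "famW W (Suc i) (T D u)"
    unfolding famW_def
  proof (intro allI impI)
    fix k assume k: "k \<le> Suc i"
    have a: "lm (u k) \<in> W (Suc i - k)"
    proof (cases "k \<le> i")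
      case True
      then have "u k \<in> W (i - k)" using assms(2) by (simp add: famW_def)
      then have "lm (u k) \<in> W (Suc (i - k))" using assms(1) by (simp add: goodW_def)
      then show ?thesis using True by (simp add: Suc_diff_le)
    next
      case False
      then have "u k = 0" using assms(3) by simp
      then show ?thesis by (simp add: subsp_0[OF sW])
    qed
    have b: "(if k = 0 then 0 else u (k - 1)) \<in> W (Suc i - k)"
    proof (cases "k = 0")
      case True then show ?thesis by (simp add: subsp_0[OF sW])
    next
      case False
      then have "k - 1 \<le> i" using k by simp
      then have "u (k - 1) \<in> W (i - (k - 1))" using assms(2) by (simp add: famW_def)
      moreover have "i - (k - 1) = Suc i - k" using False k by simp
      ultimately show ?thesis using False by simp
    qed
    show "T D u k \<in> W (Suc i - k)"
      using a b by (simp add: T_def subsp_add[OF sW] subsp_0[OF sW])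
  qed
  show "\<forall>k>Suc i. T D u k = 0"
    using assms(3) by (simp add: T_def)
qed

lemma famW_Tp:
  assumes "goodW W" "famW W i u" "\<forall>k>i. u k = 0"
  shows "famW W (i + m) ((T D ^^ m) u) \<and> (\<forall>k>i + m. (T D ^^ m) u k = 0)"
proof (induction m)
  case 0 then show ?case using assms by simp
next
  case (Suc m)
  then show ?case using famW_T[OF assms(1), of "i + m" "(T D ^^ m) u" D] by simp
qed

definition rep :: "nat \<Rightarrow> 'k mpoly \<Rightarrow> nat \<Rightarrow> 'k poly \<Rightarrow> nat \<Rightarrow> 'k mpoly" where
  "rep D w e \<gamma> = (\<lambda>k. if k < D then sc (coeff \<gamma> k) ((lm ^^ (e - k)) w) else 0)"

lemma rep_T:
  assumes "degree \<gamma> \<le> e"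
  shows "T D (rep D w e \<gamma>) = rep D w (Suc e) ([:1,1:] * \<gamma>)"
proof
  fix r
  have z: "coeff \<gamma> j = 0" if "e < j" for j using assms that by (simp add: coeff_eq_0)
  show "T D (rep D w e \<gamma>) r = rep D w (Suc e) ([:1,1:] * \<gamma>) r"
  proof (cases "r < D")
    case False then show ?thesis by (simp add: T_def rep_def)
  next
    case True
    have A: "lm (sc (coeff \<gamma> r) ((lm ^^ (e - r)) w)) = sc (coeff \<gamma> r) ((lm ^^ (Suc e - r)) w)"
    proof (cases "r \<le> e")
      case True then show ?thesis by (simp add: lm_sc Suc_diff_le)
    next
      case False then show ?thesis by (simp add: z lm_sc)
    qed
    have B: "(if r = 0 then 0 else sc (coeff \<gamma> (r - 1)) ((lm ^^ (e - (r - 1))) w))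
        = sc (if r = 0 then 0 else coeff \<gamma> (r - 1)) ((lm ^^ (Suc e - r)) w)"
    proof (cases "r = 0")
      case True then show ?thesis by simp
    next
      case False
      show ?thesis
      proof (cases "r - 1 \<le> e")
        case True
        then have "e - (r - 1) = Suc e - r" using False by simp
        then show ?thesis using False by simp
      next
        case f2: False then show ?thesis using False by (simp add: z)
      qed
    qed
    have "T D (rep D w e \<gamma>) r = lm (sc (coeff \<gamma> r) ((lm ^^ (e - r)) w)) +
        (if r = 0 then 0 else sc (coeff \<gamma> (r - 1)) ((lm ^^ (e - (r - 1))) w))"
      using True by (simp add: T_def rep_def)
    also have "\<dots> = sc (coeff \<gamma> r + (if r = 0 then 0 else coeff \<gamma> (r - 1))) ((lm ^^ (Suc e - r)) w)"
      unfolding A B by (simp add: sc_add_left)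
    also have "\<dots> = rep D w (Suc e) ([:1,1:] * \<gamma>) r"
      using True unfolding rep_def coeff_11_mult by simp
    finally show ?thesis .
  qed
qed

lemma rep_Tp:
  assumes "degree \<gamma> \<le> e"
  shows "(T D ^^ m) (rep D w e \<gamma>) = rep D w (e + m) ([:1,1:] ^ m * \<gamma>)"
proof (induction m)
  case 0 then show ?case by simp
next
  case (Suc m)
  have "degree ([:1,1:] ^ m * \<gamma>) \<le> e + m"
  proof -
    have "degree ([:1,1::'k:] ^ m * \<gamma>) \<le> degree ([:1,1::'k:] ^ m) + degree \<gamma>" by (rule degree_mult_le)
    moreover have "degree ([:1,1::'k:] ^ m) \<le> m" using degree_power_le[of "[:1,1::'k:]" m] by simp
    ultimately show ?thesis using assms by linarith
  qed
  then have "T D (rep D w (e + m) ([:1,1:] ^ m * \<gamma>)) = rep D w (Suc (e + m)) ([:1,1:] * ([:1,1:] ^ m * \<gamma>))"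
    by (rule rep_T)
  moreover have "[:1,1:] * ([:1,1:] ^ m * \<gamma>) = [:1,1:] ^ Suc m * \<gamma>"
    by (simp only: power_Suc mult.assoc)
  ultimately show ?case using Suc by simp
qed


definition ext :: "(nat \<Rightarrow> 'k mpoly set) \<Rightarrow> nat \<Rightarrow> 'k mpoly \<Rightarrow> nat \<Rightarrow> 'k mpoly set" where
  "ext W s w j = (if j < s then W j else {x + sc a ((lm ^^ (j - s)) w) | x a. x \<in> W j})"

definition mu :: "nat \<Rightarrow> (nat \<Rightarrow> 'k mpoly set) \<Rightarrow> nat" where
  "mu N W = card {(j, x). j \<le> N \<and> x \<in> mons j \<and> x \<notin> W j}"

lemma W_ext: "goodW W \<Longrightarrow> W j \<subseteq> ext W s w j"
proof
  fix x assume x: "goodW W" "x \<in> W j"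
  show "x \<in> ext W s w j"
  proof (cases "j < s")
    case True then show ?thesis using x by (simp add: ext_def)
  next
    case False then show ?thesis unfolding ext_def using x
      by simp (intro exI[of _ x] conjI exI[of _ 0]; simp)
  qed
qed

lemma lm_pow_Suc_diff: "s \<le> j \<Longrightarrow> lm ((lm ^^ (j - s)) w) = (lm ^^ (Suc j - s)) w"
  by (simp add: Suc_diff_le)

lemma goodW_ext:
  assumes "goodW W" "w \<in> M s"
  shows "goodW (ext W s w)"
  unfolding goodW_def
proof (intro allI conjI)
  fix j
  have sW: "subsp (W j)" and WM: "W j \<subseteq> M j" and lW: "\<forall>x\<in>W j. lm x \<in> W (Suc j)"
    using assms(1) by (auto simp: goodW_def)
  show "subsp (ext W s w j)"
  proof (cases "j < s")
    case True then show ?thesis by (simp add: ext_def sW)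
  next
    case False
    let ?v = "(lm ^^ (j - s)) w"
    have e: "ext W s w j = {x + sc a ?v | x a. x \<in> W j}" using False by (simp add: ext_def)
    show ?thesis unfolding subsp_def e
    proof (intro conjI ballI allI)
      show "0 \<in> {x + sc a ?v | x a. x \<in> W j}"
        by (auto intro!: exI[of _ 0] simp: subsp_0[OF sW])
    next
      fix y z assume "y \<in> {x + sc a ?v | x a. x \<in> W j}" "z \<in> {x + sc a ?v | x a. x \<in> W j}"
      then obtain x1 a1 x2 a2 where "y = x1 + sc a1 ?v" "z = x2 + sc a2 ?v" "x1 \<in> W j" "x2 \<in> W j"
        by auto
      then show "y + z \<in> {x + sc a ?v | x a. x \<in> W j}"
        by (auto intro!: exI[of _ "x1 + x2"] exI[of _ "a1 + a2"] simp: subsp_add[OF sW] sc_add_left algebra_simps)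
    next
      fix c y assume "y \<in> {x + sc a ?v | x a. x \<in> W j}"
      then obtain x1 a1 where "y = x1 + sc a1 ?v" "x1 \<in> W j" by auto
      then show "sc c y \<in> {x + sc a ?v | x a. x \<in> W j}"
        by (auto intro!: exI[of _ "sc c x1"] exI[of _ "c * a1"] simp: subsp_sc[OF sW] sc_add)
    qed
  qed
  show "ext W s w j \<subseteq> M j"
  proof (cases "j < s")
    case True then show ?thesis using WM by (simp add: ext_def)
  next
    case False
    have "(lm ^^ (j - s)) w \<in> M j" using lmp_M[OF assms(2), of "j - s"] False by simp
    then show ?thesis using False WM
      by (auto simp: ext_def intro!: subsp_add[OF M_sub] subsp_sc[OF M_sub])
  qed
  show "\<forall>x\<in>ext W s w j. lm x \<in> ext W s w (Suc j)"
  proof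
    fix y assume y: "y \<in> ext W s w j"
    show "lm y \<in> ext W s w (Suc j)"
    proof (cases "j < s")
      case True
      then have "y \<in> W j" using y by (simp add: ext_def)
      then have "lm y \<in> W (Suc j)" using lW by blast
      then show ?thesis using W_ext[OF assms(1)] by blast
    next
      case False
      then obtain x a where xa: "y = x + sc a ((lm ^^ (j - s)) w)" "x \<in> W j"
        using y by (auto simp: ext_def)
      then have "lm y = lm x + sc a ((lm ^^ (Suc j - s)) w)"
        using False by (simp add: lm_add lm_sc lm_pow_Suc_diff)
      then show ?thesis using False xa lW by (auto simp: ext_def)
    qed
  qed
qed

lemma M_sub_W:
  assumes "goodW W" "mons j \<subseteq> W j" shows "M j \<subseteq> W j"
  using mons_span[of "W j" j] assms by (simp add: goodW_def)

lemma InjQ_ext: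
  assumes "goodW W" "InjQ W c N" "\<forall>j<s. mons j \<subseteq> W j" "w \<in> M s"
  shows "InjQ (ext W s w) c N"
  unfolding InjQ_def
proof (intro allI impI)
  fix i m g assume g: "g \<in> M i" and im: "2 * i + m \<le> c" "i + m \<le> N"
    and lg: "(lm ^^ m) g \<in> ext W s w (i + m)"
  show "g \<in> ext W s w i"
  proof (cases "i < s")
    case True
    then have "M i \<subseteq> W i" using M_sub_W[OF assms(1)] assms(3) by blast
    then show ?thesis using g True by (simp add: ext_def subset_iff)
  next
    case False
    then obtain x a where xa: "(lm ^^ m) g = x + sc a ((lm ^^ (i + m - s)) w)" "x \<in> W (i + m)"
      using lg by (auto simp: ext_def)
    let ?v = "(lm ^^ (i - s)) w"
    have vM: "?v \<in> M i" using lmp_M[OF assms(4), of "i - s"] False by simp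
    have "(lm ^^ m) ?v = (lm ^^ (i + m - s)) w"
      using False by (simp add: funpow_add[symmetric, THEN fun_cong, simplified] add.commute)
    then have "(lm ^^ m) (g - sc a ?v) = x"
      using xa by (simp add: lmp_diff lmp_sc)
    then have "(lm ^^ m) (g - sc a ?v) \<in> W (i + m)" using xa by simp
    moreover have "g - sc a ?v \<in> M i" using g vM by (simp add: subsp_diff[OF M_sub] subsp_sc[OF M_sub])
    ultimately have "g - sc a ?v \<in> W i" using assms(2) im unfolding InjQ_def by blast
    then show ?thesis using False
      by (auto simp: ext_def intro!: exI[of _ "g - sc a ?v"] exI[of _ a])
  qed
qed

lemma mu_ext:
  assumes "goodW W" "s \<le> N" "w \<in> mons s" "w \<notin> W s"
  shows "mu N (ext W s w) < mu N W"
proof -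
  let ?A = "{(j, x). j \<le> N \<and> x \<in> mons j \<and> x \<notin> ext W s w j}"
  let ?B = "{(j, x). j \<le> N \<and> x \<in> mons j \<and> x \<notin> W j}"
  have fin: "finite ?B"
    by (rule finite_subset[of _ "Sigma {..N} mons"]) (auto simp: mons_fin)
  have "?A \<subseteq> ?B" using W_ext[OF assms(1)] by blast
  moreover have "(s, w) \<in> ?B - ?A"
  proof -
    have "0 \<in> W s" using assms(1) by (simp add: goodW_def subsp_0)
    then have "w \<in> ext W s w s" unfolding ext_def
      by simp (intro exI[of _ 0] conjI exI[of _ 1]; simp)
    then show ?thesis using assms by auto
  qed
  ultimately have "?A \<subset> ?B" by blast
  then show ?thesis unfolding mu_def using fin by (simp add: psubset_card_mono)
qed


lemma string_step:
  assumes good: "goodW W" and inj: "InjQ W c N" and char: "N < CHAR('k)" and D1: "1 \<le> D"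
    and low: "\<forall>j<s. M j \<subseteq> W j" and s_le: "s \<le> i" and wM: "w \<in> M s" and wW: "w \<notin> W s"
    and fg: "fam D i g" and deg: "2*i+m \<le> c + D - 1" and iN: "i + m \<le> N"
    and hyp: "famW W (i+m) ((T D ^^ m) g)" and exg: "famW (ext W s w) i g"
  shows "famW W i g"
proof -
  have sW: "subsp (W j)" for j using good by (simp add: goodW_def)
  define i' where "i' = i - s"
  have ii': "i = s + i'" using s_le by (simp add: i'_def)
  define L where "L = (LEAST e. N < e \<or> (lm ^^ e) w \<in> W (s + e))"
  have exL: "\<exists>e. N < e \<or> (lm ^^ e) w \<in> W (s + e)" by (rule exI[of _ "Suc N"]) simp
  have F1: "(lm ^^ e) w \<notin> W (s + e)" if "e < L" for e
    using not_less_Least[OF that[unfolded L_def]] by blast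
  have F2: "(lm ^^ e) w \<in> W (s + e)" if "L \<le> e" "e \<le> N" for e
  proof -
    have "N < L \<or> (lm ^^ L) w \<in> W (s + L)" unfolding L_def by (rule LeastI_ex[OF exL])
    then have "(lm ^^ L) w \<in> W (s + L)" using that by linarith
    then have "(lm ^^ (e - L)) ((lm ^^ L) w) \<in> W (s + L + (e - L))" by (rule W_lmp[OF good])
    moreover have "(lm ^^ (e - L)) ((lm ^^ L) w) = (lm ^^ e) w"
      using that by (simp add: funpow_add[symmetric, THEN fun_cong, simplified])
    ultimately show ?thesis using that by simp
  qed
  have F3: "e < L" if "2*s+e \<le> c" "s+e \<le> N" for e
  proof (rule ccontr)
    assume "\<not> e < L"
    then have "(lm ^^ e) w \<in> W (s + e)" using F2 that by simp
    then have "w \<in> W s" using inj wM that unfolding InjQ_def by blast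
    with wW show False by simp
  qed
  have sN: "s \<le> N" using s_le iN by simp
  have L0: "0 < L"
  proof (rule ccontr)
    assume "\<not> 0 < L"
    then have "(lm ^^ 0) w \<in> W (s + 0)" using F2[of 0] by simp
    with wW show False by simp
  qed
  have E: "2*i'+m+2 \<le> L + D \<or> i'+m < L"
  proof (cases "2*s \<le> c")
    case True
    show ?thesis
    proof (cases "c - 2*s \<le> N - s")
      case True
      then have "c - 2*s < L" using F3[of "c - 2*s"] \<open>2*s \<le> c\<close> sN by simp
      then show ?thesis using deg ii' \<open>2*s \<le> c\<close> D1 by linarith
    next
      case False
      then have "N - s < L" using F3[of "N - s"] sN by simp
      then show ?thesis using iN ii' sN by linarith
    qed
  next
    case False
    then show ?thesis using deg ii' D1 by linarith
  qed
  define \<beta> where "\<beta> k = (if k \<le> i' \<and> k < D \<and> i' - k < L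
      then (SOME a. \<exists>x\<in>W (i - k). g k = x + sc a ((lm ^^ (i' - k)) w)) else 0)" for k
  define bp where "bp = (\<Sum>k\<le>i'. monom (\<beta> k) k)"
  have cbp: "coeff bp k = \<beta> k" for k
    by (simp add: bp_def coeff_sum coeff_monom \<beta>_def)
  have dbp: "degree bp \<le> i'"
    by (rule degree_le) (simp add: cbp \<beta>_def)
  define v where "v = rep D w i' bp"
  have v_eq: "v k = (if k < D then sc (\<beta> k) ((lm ^^ (i' - k)) w) else 0)" for k
    by (simp add: v_def rep_def cbp)
  define u where "u k = g k - v k" for k
  have gk0: "g k = 0" if "\<not> (k \<le> i \<and> k < D)" for k using fg that by (simp add: fam_def)
  have U2: "\<forall>k>i. u k = 0"
    by (auto simp: u_def v_eq gk0 \<beta>_def i'_def)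
  have U1: "famW W i u"
    unfolding famW_def
  proof (intro allI impI)
    fix k assume k: "k \<le> i"
    show "u k \<in> W (i - k)"
    proof (cases "k < D")
      case False then show ?thesis by (simp add: u_def v_eq gk0 subsp_0[OF sW])
    next
      case kD: True
      have gM: "g k \<in> M (i - k)" using fg k kD by (simp add: fam_def)
      show ?thesis
      proof (cases "k \<le> i'")
        case False
        then have "i - k < s" using ii' k by linarith
        then have "g k \<in> W (i - k)" using gM low by blast
        moreover have "v k = 0" using False by (simp add: v_eq \<beta>_def)
        ultimately show ?thesis by (simp add: u_def)
      next
        case ki': True
        have ik: "i - k - s = i' - k" using ii' ki' by simp
        have "g k \<in> ext W s w (i - k)" using exg k by (simp add: famW_def)
        moreover have notlt: "\<not> (i - k < s)" using ii' ki' by linarith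
        ultimately have "g k \<in> {x + sc a ((lm ^^ (i - k - s)) w) | x a. x \<in> W (i - k)}"
          by (simp only: ext_def if_False)
        then obtain x a where xa: "x \<in> W (i - k)" "g k = x + sc a ((lm ^^ (i' - k)) w)"
          unfolding ik by blast
        show ?thesis
        proof (cases "i' - k < L")
          case True
          then have "\<beta> k = (SOME a. \<exists>x\<in>W (i - k). g k = x + sc a ((lm ^^ (i' - k)) w))"
            using kD ki' by (simp add: \<beta>_def)
          moreover have Pa: "\<exists>x\<in>W (i - k). g k = x + sc a ((lm ^^ (i' - k)) w)"
            using xa by blast
          have "\<exists>x\<in>W (i - k). g k = x + sc (SOME a. \<exists>x\<in>W (i - k). g k = x + sc a ((lm ^^ (i' - k)) w)) ((lm ^^ (i' - k)) w)"
            by (rule someI[of _ a]) (rule Pa)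
          ultimately have "\<exists>x\<in>W (i - k). g k = x + sc (\<beta> k) ((lm ^^ (i' - k)) w)"
            by simp
          then obtain x' where "x' \<in> W (i - k)" "g k = x' + sc (\<beta> k) ((lm ^^ (i' - k)) w)" by blast
          then show ?thesis using kD by (simp add: u_def v_eq)
        next
          case False
          then have "(lm ^^ (i' - k)) w \<in> W (s + (i' - k))" using F2 iN ii' by simp
          moreover have "s + (i' - k) = i - k" using ii' ki' by simp
          ultimately have "g k \<in> W (i - k)" using xa by (simp add: subsp_add[OF sW] subsp_sc[OF sW])
          moreover have "v k = 0" using False by (simp add: v_eq \<beta>_def)
          ultimately show ?thesis by (simp add: u_def)
        qed
      qed
    qed
  qed
  have g_eq: "g = (\<lambda>k. u k + v k)" by (simp add: u_def)
  define \<gamma> where "\<gamma> = [:1,1:] ^ m * bp"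
  have Tv: "(T D ^^ m) v = rep D w (i' + m) \<gamma>"
    unfolding v_def \<gamma>_def by (rule rep_Tp[OF dbp])
  have Tu: "famW W (i + m) ((T D ^^ m) u)" using famW_Tp[OF good U1 U2] by blast
  have Tvw: "famW W (i + m) ((T D ^^ m) v)"
    unfolding famW_def
  proof (intro allI impI)
    fix k assume "k \<le> i + m"
    then have "(T D ^^ m) g k \<in> W (i + m - k)" "(T D ^^ m) u k \<in> W (i + m - k)"
      using hyp Tu by (auto simp: famW_def)
    moreover have "(T D ^^ m) v k = (T D ^^ m) g k - (T D ^^ m) u k"
      unfolding g_eq Tp_add by simp
    ultimately show "(T D ^^ m) v k \<in> W (i + m - k)" by (simp add: subsp_diff[OF sW])
  qed
  have B5: "coeff \<gamma> r = 0" if "r < D" "r \<le> i' + m" "i' + m - r < L" for r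
  proof -
    have "rep D w (i' + m) \<gamma> r \<in> W (i + m - r)"
      using Tvw Tv that ii' by (auto simp: famW_def)
    then have "sc (coeff \<gamma> r) ((lm ^^ (i' + m - r)) w) \<in> W (i + m - r)"
      using that by (simp add: rep_def)
    moreover have "(lm ^^ (i' + m - r)) w \<notin> W (i + m - r)"
      using F1[OF that(3)] that ii' by (simp add: add.commute add.left_commute)
    ultimately show ?thesis by (rule subsp_sc_notin[OF sW])
  qed
  have dgam: "degree \<gamma> \<le> i' + m"
  proof -
    have "degree \<gamma> \<le> degree ([:1,1::'k:] ^ m) + degree bp" unfolding \<gamma>_def by (rule degree_mult_le)
    moreover have "degree ([:1,1::'k:] ^ m) \<le> m" using degree_power_le[of "[:1,1::'k:]" m] by simp
    ultimately show ?thesis using dbp by linarith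
  qed
  have dbpD: "degree bp \<le> D - 1"
  proof (rule degree_le, intro allI impI)
    fix k assume "D - 1 < k"
    then have "\<not> k < D" using D1 by linarith
    then show "coeff bp k = 0" by (simp add: cbp \<beta>_def)
  qed
  have dgamD: "degree \<gamma> \<le> D - 1 + m"
  proof -
    have "degree \<gamma> \<le> degree ([:1,1::'k:] ^ m) + degree bp" unfolding \<gamma>_def by (rule degree_mult_le)
    moreover have "degree ([:1,1::'k:] ^ m) \<le> m" using degree_power_le[of "[:1,1::'k:]" m] by simp
    ultimately show ?thesis using dbpD by linarith
  qed
  have low_g: "coeff \<gamma> r = 0" if "r + L \<le> i'" for r
  proof -
    have "coeff bp k = 0" if "k \<le> r" for k
    proof -
      have "\<not> i' - k < L" using that \<open>r + L \<le> i'\<close> by linarith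
      then show ?thesis by (simp add: cbp \<beta>_def)
    qed
    then show ?thesis unfolding \<gamma>_def coeff_mult by (simp add: sum.neutral)
  qed
  let ?S1 = "{r. r < D \<and> i'+1 \<le> r+L \<and> r+L \<le> i'+m}"
  let ?S2 = "{r. D \<le> r \<and> r \<le> i'+m \<and> r < D+m}"
  have supp: "coeff \<gamma> r \<noteq> 0 \<longrightarrow> r \<in> ?S1 \<union> ?S2" for r
  proof
    assume nz: "coeff \<gamma> r \<noteq> 0"
    have r1: "r \<le> i' + m"
    proof (rule ccontr)
      assume "\<not> r \<le> i' + m" then have "degree \<gamma> < r" using dgam by linarith
      then show False using nz coeff_eq_0 by blast
    qed
    have r2: "r < D + m"
    proof (rule ccontr)
      assume "\<not> r < D + m" then have "degree \<gamma> < r" using dgamD D1 by linarith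
      then show False using nz coeff_eq_0 by blast
    qed
    have r3: "i' + 1 \<le> r + L"
    proof (rule ccontr)
      assume "\<not> i' + 1 \<le> r + L" then have "r + L \<le> i'" by linarith
      then show False using nz low_g by blast
    qed
    show "r \<in> ?S1 \<union> ?S2"
    proof (cases "r < D")
      case True
      then have "\<not> i' + m - r < L" using B5 r1 nz by blast
      then show ?thesis using True r1 r3 by auto
    next
      case False then show ?thesis using r1 r2 by auto
    qed
  qed
  have fin: "finite (?S1 \<union> ?S2)" by (rule finite_subset[of _ "{..<D+m}"]) auto
  have "\<gamma> = 0"
  proof (rule gap_lemma[OF fin card_S_bound[OF E]])
    show "\<forall>j\<in>?S1 \<union> ?S2. j < CHAR('k)" using char iN ii' by auto
    show "\<forall>j. coeff \<gamma> j \<noteq> 0 \<longrightarrow> j \<in> ?S1 \<union> ?S2" using supp by blast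
    show "[:1,1:] ^ m dvd \<gamma>" unfolding \<gamma>_def by simp
  qed
  then have "bp = 0" unfolding \<gamma>_def by simp
  then have "v = (\<lambda>k. 0)" by (auto simp: v_def rep_def)
  then show ?thesis using U1 g_eq by simp
qed

lemma tensor_main:
  assumes "N < CHAR('k)" "1 \<le> D"
  shows "goodW W \<Longrightarrow> InjQ W c N \<Longrightarrow> fam D i g \<Longrightarrow> 2*i+m \<le> c + D - 1 \<Longrightarrow> i + m \<le> N
    \<Longrightarrow> famW W (i+m) ((T D ^^ m) g) \<Longrightarrow> famW W i g"
proof (induction "mu N W" arbitrary: W rule: less_induct)
  case less
  have sW: "subsp (W j)" for j using less.prems(1) by (simp add: goodW_def)
  have gk: "g k \<in> M (i - k) \<or> g k = 0" for k using less.prems(3) by (auto simp: fam_def)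
  show ?case
  proof (cases "\<forall>j\<le>N. mons j \<subseteq> W j")
    case True
    then have MW: "M j \<subseteq> W j" if "j \<le> N" for j using M_sub_W[OF less.prems(1)] that by blast
    show ?thesis unfolding famW_def
    proof (intro allI impI)
      fix k assume "k \<le> i"
      have "i - k \<le> N" using less.prems(5) by linarith
      then have "M (i - k) \<subseteq> W (i - k)" using MW by blast
      then show "g k \<in> W (i - k)" using gk[of k] subsp_0[OF sW, of "i - k"] by auto
    qed
  next
    case False
    define s where "s = (LEAST j. j \<le> N \<and> \<not> mons j \<subseteq> W j)"
    have ex: "\<exists>j. j \<le> N \<and> \<not> mons j \<subseteq> W j" using False by blast
    have sN: "s \<le> N" and ns: "\<not> mons s \<subseteq> W s"
      using LeastI_ex[OF ex] by (auto simp: s_def)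
    have lowm: "\<forall>j<s. mons j \<subseteq> W j"
      using not_less_Least[of _ "\<lambda>j. j \<le> N \<and> \<not> mons j \<subseteq> W j"] sN unfolding s_def[symmetric]
      by (metis le_trans less_imp_le)
    have low: "\<forall>j<s. M j \<subseteq> W j" using lowm M_sub_W[OF less.prems(1)] by blast
    obtain w where wm: "w \<in> mons s" and wW: "w \<notin> W s" using ns by blast
    have wM: "w \<in> M s" using wm mons_M by blast
    let ?W' = "ext W s w"
    have g': "goodW ?W'" by (rule goodW_ext[OF less.prems(1) wM])
    have i': "InjQ ?W' c N" by (rule InjQ_ext[OF less.prems(1,2) lowm wM])
    have mu': "mu N ?W' < mu N W" by (rule mu_ext[OF less.prems(1) sN wm wW])
    have h': "famW ?W' (i+m) ((T D ^^ m) g)"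
      using less.prems(6) W_ext[OF less.prems(1), of _ s w] unfolding famW_def by blast
    have e: "famW ?W' i g" using less.hyps[OF mu' g' i' less.prems(3,4,5) h'] .
    show ?thesis
    proof (cases "s \<le> i")
      case True
      show ?thesis by (rule string_step[OF less.prems(1,2) assms low True wM wW less.prems(3,4,5,6) e])
    next
      case False
      show ?thesis unfolding famW_def
      proof (intro allI impI)
        fix k assume "k \<le> i"
        have "i - k < s" using False by linarith
        then have "M (i - k) \<subseteq> W (i - k)" using low by blast
        then show "g k \<in> W (i - k)" using gk[of k] subsp_0[OF sW, of "i - k"] by auto
      qed
    qed
  qed
qed

end


definition mons :: "(nat \<Rightarrow> nat) \<Rightarrow> nat \<Rightarrow> nat \<Rightarrow> 'k::comm_ring_1 mpoly set" where
  "mons d n j = (\<lambda>a. Poly_Mapping.single a 1) ` {a. std_mon d n a \<and> mon_deg a = j}"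

lemma finite_std: "finite {a. std_mon d n a}"
proof -
  let ?S = "{a. std_mon d n a}"
  let ?\<phi> = "\<lambda>a. restrict (lookup a) {..<n}"
  have "inj_on ?\<phi> ?S"
  proof (rule inj_onI)
    fix a b assume ab: "a \<in> ?S" "b \<in> ?S" "?\<phi> a = ?\<phi> b"
    show "a = b"
    proof (rule poly_mapping_eqI)
      fix j show "lookup a j = lookup b j"
      proof (cases "j < n")
        case True then show ?thesis using ab(3) by (metis lessThan_iff restrict_apply')
      next
        case False
        then have "j \<notin> keys a" "j \<notin> keys b" using ab(1,2) by (auto simp: std_mon_def)
        then show ?thesis by (simp add: in_keys_iff)
      qed
    qed
  qed
  moreover have "?\<phi> ` ?S \<subseteq> PiE {..<n} (\<lambda>j. {..<d j})"
    by (auto simp: std_mon_def PiE_iff split: if_splits)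
  moreover have "finite (PiE {..<n} (\<lambda>j. {..<d j}))" by (rule finite_PiE) auto
  ultimately show ?thesis by (rule inj_on_finite)
qed

lemma single_sc: "Poly_Mapping.single a c = sc c (Poly_Mapping.single a 1)"
  by (rule poly_mapping_eqI) (simp add: lookup_single when_def)

lemma subsp_gp: "subsp (graded_piece d n j)"
  by (simp add: subsp_def gp_add gp_sc)

lemma gp_span:
  fixes V :: "'k::comm_ring_1 mpoly set"
  assumes "subsp V" "mons d n j \<subseteq> V"
  shows "graded_piece d n j \<subseteq> V"
proof
  fix f :: "'k mpoly" assume f: "f \<in> graded_piece d n j"
  have "f = (\<Sum>a\<in>keys f. sc (lookup f a) (Poly_Mapping.single a 1))"
    by (subst sum_singles) (simp add: single_sc[symmetric])
  also have "\<dots> \<in> V"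
  proof (rule subsp_sum[OF assms(1)])
    fix a assume "a \<in> keys f"
    then have "std_mon d n a" "mon_deg a = j" using f by (auto simp: graded_piece_def)
    then have "Poly_Mapping.single a 1 \<in> V" using assms(2) by (auto simp: mons_def)
    then show "sc (lookup f a) (Poly_Mapping.single a 1) \<in> V" by (rule subsp_sc[OF assms(1)])
  qed simp
  finally show "f \<in> V" .
qed

lemma tens_inst: "tens (graded_piece d n) (lam d n) (mons d n :: nat \<Rightarrow> 'k::field mpoly set)"
proof
  show "subsp (graded_piece d n j)" for j by (rule subsp_gp)
  show "lam d n (x + y) = lam d n x + lam d n y" for x y :: "'k mpoly" by (rule lam_add)
  show "lam d n (sc c x) = sc c (lam d n x)" for c and x :: "'k mpoly" by (rule lam_sc)
  show "x \<in> graded_piece d n j \<Longrightarrow> lam d n x \<in> graded_piece d n (Suc j)" for x :: "'k mpoly" and j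
    by (rule lam_gp)
  show "finite (mons d n j :: 'k mpoly set)" for j
    unfolding mons_def by (rule finite_imageI) (rule finite_subset[OF _ finite_std[of d n]], auto)
  show "mons d n j \<subseteq> graded_piece d n j" for j by (auto simp: mons_def gp_single)
  show "subsp V \<Longrightarrow> mons d n j \<subseteq> V \<Longrightarrow> graded_piece d n j \<subseteq> V" for V :: "'k mpoly set" and j
    by (rule gp_span)
qed


definition slc :: "nat \<Rightarrow> nat \<Rightarrow> 'k::comm_ring_1 mpoly \<Rightarrow> 'k mpoly" where
  "slc n k f = Abs_poly_mapping (\<lambda>b. if lookup b n = 0 then lookup f (b + Poly_Mapping.single n k) else 0)"

lemma lookup_slc: "lookup (slc n k f) b = (if lookup b n = 0 then lookup f (b + Poly_Mapping.single n k) else 0)"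
proof -
  have "{b. (if lookup b n = 0 then lookup f (b + Poly_Mapping.single n k) else 0) \<noteq> 0}
      \<subseteq> (\<lambda>a. a - Poly_Mapping.single n k) ` keys f"
  proof
    fix b assume "b \<in> {b. (if lookup b n = 0 then lookup f (b + Poly_Mapping.single n k) else 0) \<noteq> 0}"
    then have "b + Poly_Mapping.single n k \<in> keys f" by (auto simp: in_keys_iff split: if_splits)
    moreover have "b = (b + Poly_Mapping.single n k) - Poly_Mapping.single n k" by simp
    ultimately show "b \<in> (\<lambda>a. a - Poly_Mapping.single n k) ` keys f" by blast
  qed
  then have "finite {b. (if lookup b n = 0 then lookup f (b + Poly_Mapping.single n k) else 0) \<noteq> 0}"
    by (rule finite_subset) simp
  then show ?thesis unfolding slc_def by simp
qed

lemma lookup_add_single: "lookup (b + Poly_Mapping.single n r) j = lookup b j + (if j = n then r else 0)"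
  by (simp add: lookup_add lookup_single when_def)

lemma std_Suc:
  assumes "lookup b n = 0"
  shows "std_mon d (Suc n) (b + Poly_Mapping.single n r) \<longleftrightarrow> std_mon d n b \<and> r < d n"
proof -
  have k: "keys (b + Poly_Mapping.single n r) \<subseteq> {..<Suc n} \<longleftrightarrow> keys b \<subseteq> {..<n}"
  proof
    assume h: "keys (b + Poly_Mapping.single n r) \<subseteq> {..<Suc n}"
    show "keys b \<subseteq> {..<n}"
    proof
      fix j assume j: "j \<in> keys b"
      then have "j \<noteq> n" using assms by (auto simp: in_keys_iff)
      moreover have "j \<in> keys (b + Poly_Mapping.single n r)" using j
        by (auto simp: in_keys_iff lookup_add_single)
      ultimately show "j \<in> {..<n}" using h by auto
    qed
  next
    assume h: "keys b \<subseteq> {..<n}"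
    show "keys (b + Poly_Mapping.single n r) \<subseteq> {..<Suc n}"
    proof
      fix j assume j: "j \<in> keys (b + Poly_Mapping.single n r)"
      show "j \<in> {..<Suc n}"
      proof (cases "j = n")
        case False
        then have "j \<in> keys b" using j by (auto simp: in_keys_iff lookup_add_single)
        then show ?thesis using h by auto
      qed simp
    qed
  qed
  show ?thesis unfolding std_mon_def k
    by (auto simp: lookup_add_single assms less_Suc_eq)
qed

lemma add_single_minus_other:
  "j \<noteq> n \<Longrightarrow> (b + Poly_Mapping.single n r) - Poly_Mapping.single j 1 = (b - Poly_Mapping.single j 1) + Poly_Mapping.single n r"
  for b :: "nat \<Rightarrow>\<^sub>0 nat"
  by (rule poly_mapping_eqI) (auto simp: lookup_add lookup_minus lookup_single when_def)

lemma add_single_minus_same: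
  "0 < r \<Longrightarrow> (b + Poly_Mapping.single n r) - Poly_Mapping.single n 1 = b + Poly_Mapping.single n (r - 1)"
  for b :: "nat \<Rightarrow>\<^sub>0 nat"
proof (rule poly_mapping_eqI)
  fix k assume "0 < r"
  then show "lookup (b + Poly_Mapping.single n r - Poly_Mapping.single n 1) k =
    lookup (b + Poly_Mapping.single n (r - 1)) k"
    by (cases "k = n") (simp_all add: lookup_add lookup_minus lookup_single)
qed

lemma slc_nz:
  assumes f: "f \<in> graded_piece d (Suc n) i" and nz: "lookup (slc n k f) b \<noteq> 0"
  shows "lookup b n = 0 \<and> std_mon d n b \<and> mon_deg b = i - k \<and> k \<le> i \<and> k < d n"
proof -
  have b0: "lookup b n = 0" using nz by (simp add: lookup_slc split: if_splits)
  then have "lookup f (b + Poly_Mapping.single n k) \<noteq> 0" using nz by (simp add: lookup_slc)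
  then have "std_mon d (Suc n) (b + Poly_Mapping.single n k)" "mon_deg (b + Poly_Mapping.single n k) = i"
    using f by (auto simp: gp_iff)
  then show ?thesis using std_Suc[OF b0] b0 by auto
qed


lemma slc_lam:
  assumes f: "f \<in> graded_piece d (Suc n) i"
  shows "slc n r (lam d (Suc n) f) =
    (if r < d n then lam d n (slc n r f) + (if r = 0 then 0 else slc n (r - 1) f) else 0)"
proof (rule poly_mapping_eqI)
  fix b :: "nat \<Rightarrow>\<^sub>0 nat"
  let ?R = "(if r < d n then lam d n (slc n r f) + (if r = 0 then 0 else slc n (r - 1) f) else 0)"
  show "lookup (slc n r (lam d (Suc n) f)) b = lookup ?R b"
  proof (cases "lookup b n = 0")
    case False
    then have "n \<in> keys b" by (simp add: in_keys_iff)
    then have "\<not> keys b \<subseteq> {..<n}" by auto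
    then have ns: "\<not> std_mon d n b" by (simp add: std_mon_def)
    show ?thesis using False ns by (simp add: lookup_slc lookup_lam lookup_add)
  next
    case b0: True
    let ?e = "\<lambda>j. Poly_Mapping.single j (1::nat)"
    have L: "lookup (slc n r (lam d (Suc n) f)) b = (if std_mon d n b \<and> r < d n then
        (\<Sum>j<n. if 0 < lookup b j then lookup (slc n r f) (b - ?e j) else 0)
        + (if 0 < r then lookup (slc n (r - 1) f) b else 0) else 0)"
    proof -
      have "lookup (slc n r (lam d (Suc n) f)) b = lookup (lam d (Suc n) f) (b + Poly_Mapping.single n r)"
        using b0 by (simp add: lookup_slc)
      also have "\<dots> = (if std_mon d n b \<and> r < d n then
          (\<Sum>j<Suc n. if 0 < lookup (b + Poly_Mapping.single n r) j
            then lookup f ((b + Poly_Mapping.single n r) - ?e j) else 0) else 0)"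
        by (simp add: lookup_lam std_Suc[OF b0])
      also have "(\<Sum>j<Suc n. if 0 < lookup (b + Poly_Mapping.single n r) j
            then lookup f ((b + Poly_Mapping.single n r) - ?e j) else 0)
          = (\<Sum>j<n. if 0 < lookup b j then lookup (slc n r f) (b - ?e j) else 0)
            + (if 0 < r then lookup (slc n (r - 1) f) b else 0)"
      proof -
        have A: "(\<Sum>j<n. if 0 < lookup (b + Poly_Mapping.single n r) j
            then lookup f ((b + Poly_Mapping.single n r) - ?e j) else 0)
          = (\<Sum>j<n. if 0 < lookup b j then lookup (slc n r f) (b - ?e j) else 0)"
        proof (rule sum.cong[OF refl])
          fix j assume "j \<in> {..<n}"
          then have jn: "j \<noteq> n" by simp
          have "lookup (b - ?e j) n = 0" using b0 jn by (simp add: lookup_minus lookup_single)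
          then show "(if 0 < lookup (b + Poly_Mapping.single n r) j
            then lookup f ((b + Poly_Mapping.single n r) - ?e j) else 0)
            = (if 0 < lookup b j then lookup (slc n r f) (b - ?e j) else 0)"
            unfolding add_single_minus_other[OF jn] using jn \<open>lookup (b - ?e j) n = 0\<close>
            by (simp add: lookup_add_single lookup_slc)
        qed
        have B: "(if 0 < lookup (b + Poly_Mapping.single n r) n
            then lookup f ((b + Poly_Mapping.single n r) - ?e n) else 0)
            = (if 0 < r then lookup (slc n (r - 1) f) b else 0)"
        proof (cases "0 < r")
          case True
          show ?thesis unfolding add_single_minus_same[OF True] using b0 True
            by (simp add: lookup_add_single lookup_slc)
        next
          case False then show ?thesis using b0 by (simp add: lookup_add_single)
        qed
        show ?thesis unfolding sum.lessThan_Suc A B ..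
      qed
      finally show ?thesis .
    qed
    show ?thesis
    proof (cases "r < d n")
      case False
      then show ?thesis using L by simp
    next
      case rd: True
      show ?thesis
      proof (cases "std_mon d n b")
        case True
        then show ?thesis using L rd by (simp add: lookup_add lookup_lam)
      next
        case False
        have "lookup (slc n (r - 1) f) b = 0"
        proof (rule ccontr)
          assume "lookup (slc n (r - 1) f) b \<noteq> 0"
          then have "std_mon d n b" using slc_nz[OF f] by blast
          with False show False by simp
        qed
        then show ?thesis using L rd False by (simp add: lookup_add lookup_lam)
      qed
    qed
  qed
qed

lemma slc_fam_nz:
  assumes f: "f \<in> graded_piece d (Suc n) i"
  shows "(k \<le> i \<and> k < d n \<longrightarrow> slc n k f \<in> graded_piece d n (i - k)) \<and>
     (\<not> (k \<le> i \<and> k < d n) \<longrightarrow> slc n k f = 0)"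
proof (intro conjI impI)
  show "slc n k f \<in> graded_piece d n (i - k)"
    unfolding gp_iff using slc_nz[OF f] by blast
  assume "\<not> (k \<le> i \<and> k < d n)"
  then show "slc n k f = 0" using slc_nz[OF f] by (metis poly_mapping_eqI lookup_zero)
qed

lemma slc_zero:
  assumes f: "f \<in> graded_piece d (Suc n) i" and z: "\<And>k. slc n k f = 0"
  shows "f = 0"
proof (rule poly_mapping_eqI)
  fix a
  show "lookup f a = lookup 0 a"
  proof (rule ccontr)
    assume nz: "lookup f a \<noteq> lookup 0 a"
    define r where "r = lookup a n"
    define b where "b = a - Poly_Mapping.single n r"
    have ab: "b + Poly_Mapping.single n r = a"
      by (rule poly_mapping_eqI) (simp add: b_def r_def lookup_add lookup_minus lookup_single when_def)
    have b0: "lookup b n = 0" by (simp add: b_def r_def lookup_minus)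
    have "lookup (slc n r f) b = lookup f a" using b0 ab by (simp add: lookup_slc)
    then show False using z nz by simp
  qed
qed


lemma slc_pow:
  assumes f: "f \<in> graded_piece d (Suc n) i"
  shows "(\<lambda>k. slc n k ((lam d (Suc n) ^^ m) f)) = (tens.T (lam d n) (d n) ^^ m) (\<lambda>k. slc n k f)"
proof (induction m)
  case 0 then show ?case by simp
next
  case (Suc m)
  have fm: "(lam d (Suc n) ^^ m) f \<in> graded_piece d (Suc n) (i + m)" by (rule lam_pow_gp[OF f])
  have "(\<lambda>k. slc n k ((lam d (Suc n) ^^ Suc m) f)) = (\<lambda>k. slc n k (lam d (Suc n) ((lam d (Suc n) ^^ m) f)))"
    by simp
  also have "\<dots> = tens.T (lam d n) (d n) (\<lambda>k. slc n k ((lam d (Suc n) ^^ m) f))"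
    by (rule ext) (simp only: slc_lam[OF fm] tens.T_def[OF tens_inst])
  also have "\<dots> = tens.T (lam d n) (d n) ((tens.T (lam d n) (d n) ^^ m) (\<lambda>k. slc n k f))"
    by (simp only: Suc)
  finally show ?case by simp
qed

theorem injlef:
  fixes d :: "nat \<Rightarrow> nat"
  assumes char: "N < CHAR('k::field)"
  shows "(\<forall>j<n. 0 < d j) \<Longrightarrow> f \<in> graded_piece d n i \<Longrightarrow> 2*i+m \<le> (\<Sum>j<n. d j - 1) \<Longrightarrow> i + m \<le> N
    \<Longrightarrow> (lam d n ^^ m) (f::'k mpoly) = 0 \<Longrightarrow> f = 0"
proof (induction n arbitrary: i m f)
  case 0
  then have "m = 0" by simp
  then show ?case using 0 by simp
next
  case (Suc n)
  interpret tens "graded_piece d n" "lam d n" "mons d n :: nat \<Rightarrow> 'k mpoly set" by (rule tens_inst)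
  let ?W = "\<lambda>_::nat. {0::'k mpoly}"
  let ?c = "\<Sum>j<n. d j - 1"
  have gW: "goodW ?W" by (simp add: goodW_def subsp_def)
  have iW: "InjQ ?W ?c N"
    unfolding InjQ_def using Suc.IH Suc.prems(1) by simp
  let ?g = "\<lambda>k. slc n k f"
  have fg: "fam (d n) i ?g" unfolding fam_def using slc_fam_nz[OF Suc.prems(2)] by blast
  have "0 < d n" using Suc.prems(1) by simp
  then have D1: "1 \<le> d n" by simp
  have deg: "2*i+m \<le> ?c + d n - 1" using Suc.prems(3) D1 by simp
  have "(T (d n) ^^ m) ?g = (\<lambda>k. slc n k ((lam d (Suc n) ^^ m) f))"
    by (rule slc_pow[OF Suc.prems(2), symmetric])
  also have "\<dots> = (\<lambda>k. 0)" using Suc.prems(5) by (auto simp: lookup_slc intro!: poly_mapping_eqI)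
  finally have "famW ?W (i + m) ((T (d n) ^^ m) ?g)" by (simp add: famW_def)
  then have "famW ?W i ?g"
    using tensor_main[OF char D1 gW iW fg deg Suc.prems(4)] by blast
  then have "slc n k f = 0" for k using fg by (cases "k \<le> i") (auto simp: famW_def fam_def)
  then show ?case by (rule slc_zero[OF Suc.prems(2)])
qed


lemma lookup_le_mon_deg: "lookup a j \<le> mon_deg a"
proof (cases "j \<in> keys a")
  case True
  then show ?thesis unfolding mon_deg_def
    by (metis finite_keys member_le_sum zero_le)
next
  case False then show ?thesis by (simp add: in_keys_iff)
qed

lemma caseD_aux:
  assumes jn: "j < n"
  shows "(\<forall>a\<in>keys f. lookup a j \<le> K) \<Longrightarrow>
    (\<forall>b\<in>keys ((lam d n ^^ m) f). lookup b j \<le> K + m) \<and>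
    (\<forall>b. lookup b j = K + m \<longrightarrow> std_mon d n b \<longrightarrow> lookup ((lam d n ^^ m) f) b =
        lookup f (b - Poly_Mapping.single j m))"
proof (induction m)
  case 0
  then show ?case by (auto simp: in_keys_iff)
next
  case (Suc m)
  let ?h = "(lam d n ^^ m) f"
  have IH1: "\<forall>b\<in>keys ?h. lookup b j \<le> K + m" and
    IH2: "\<forall>b. lookup b j = K + m \<longrightarrow> std_mon d n b \<longrightarrow> lookup ?h b = lookup f (b - Poly_Mapping.single j m)"
    using Suc by auto
  have k1: "lookup ?h b' = 0" if "K + m < lookup b' j" for b'
    using IH1 that by (meson in_keys_iff not_le)
  show ?case
  proof (intro conjI ballI allI impI)
    fix b assume b: "b \<in> keys ((lam d n ^^ Suc m) f)"
    then have "lookup (lam d n ?h) b \<noteq> 0" by (simp add: in_keys_iff)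
    then obtain j' where "j' < n" "0 < lookup b j'" "lookup ?h (b - Poly_Mapping.single j' 1) \<noteq> 0"
      by (auto simp: lookup_lam split: if_splits elim!: sum.not_neutral_contains_not_neutral)
    then have "lookup (b - Poly_Mapping.single j' 1) j \<le> K + m" using k1 by (meson not_le)
    then show "lookup b j \<le> K + Suc m" by (simp add: lookup_minus lookup_single when_def split: if_splits)
  next
    fix b assume bj: "lookup b j = K + Suc m" and True: "std_mon d n b"
    show "lookup ((lam d n ^^ Suc m) f) b = lookup f (b - Poly_Mapping.single j (Suc m))"
    proof -
      have other: "(if 0 < lookup b j' then lookup ?h (b - Poly_Mapping.single j' 1) else 0) = 0"
        if "j' \<noteq> j" for j'
        using that bj k1[of "b - Poly_Mapping.single j' 1"] by (simp add: lookup_minus lookup_single when_def)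
      have "lookup ((lam d n ^^ Suc m) f) b =
          (\<Sum>j'<n. if 0 < lookup b j' then lookup ?h (b - Poly_Mapping.single j' 1) else 0)"
        using True by (simp add: lookup_lam)
      also have "\<dots> = (if 0 < lookup b j then lookup ?h (b - Poly_Mapping.single j 1) else 0)"
        using jn other by (subst sum.remove[of _ j]) (auto intro!: sum.neutral)
      also have "\<dots> = lookup ?h (b - Poly_Mapping.single j 1)" using bj by simp
      also have "\<dots> = lookup f (b - Poly_Mapping.single j 1 - Poly_Mapping.single j m)"
        using IH2 std_mon_sub1[OF True, of j] bj by (simp add: lookup_minus)
      also have "b - Poly_Mapping.single j 1 - Poly_Mapping.single j m = b - Poly_Mapping.single j (Suc m)"
        by (rule poly_mapping_eqI) (simp add: lookup_minus lookup_single when_def)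
      finally show ?thesis .
    qed
  qed
qed

theorem caseD_inj:
  fixes f :: "'k::comm_ring_1 mpoly"
  assumes jn: "j < n" and f: "f \<in> graded_piece d n i" and im: "i + m < d j"
    and z: "(lam d n ^^ m) f = 0"
  shows "f = 0"
proof (rule ccontr)
  assume "f \<noteq> 0"
  then have ne: "keys f \<noteq> {}" by simp
  define K where "K = Max ((\<lambda>a. lookup a j) ` keys f)"
  have ne': "(\<lambda>a. lookup a j) ` keys f \<noteq> {}" using ne by blast
  have "K \<in> (\<lambda>a. lookup a j) ` keys f" unfolding K_def by (rule Max_in[OF _ ne']) simp
  then obtain a where a: "a \<in> keys f" "lookup a j = K" by blast
  have Kb: "\<forall>a\<in>keys f. lookup a j \<le> K" unfolding K_def by simp
  have sa: "std_mon d n a" "mon_deg a = i" using a f by (auto simp: graded_piece_def)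
  let ?b = "a + Poly_Mapping.single j m"
  have bj: "lookup ?b j = K + m" using a by (simp add: lookup_add)
  have Ki: "K \<le> i" using a sa lookup_le_mon_deg[of a j] by simp
  have sb: "std_mon d n ?b"
    unfolding std_mon_def
  proof
    have "keys ?b \<subseteq> keys a \<union> keys (Poly_Mapping.single j m)" by (rule keys_add)
    also have "\<dots> \<subseteq> {..<n}" using sa(1) jn by (auto simp: std_mon_def)
    finally show "keys ?b \<subseteq> {..<n}" .
    show "\<forall>j'<n. lookup ?b j' < d j'"
      using sa(1) Ki im a by (auto simp: std_mon_def lookup_add lookup_single when_def)
  qed
  have "lookup ((lam d n ^^ m) f) ?b = lookup f (?b - Poly_Mapping.single j m)"
    using caseD_aux[OF jn Kb] bj sb by simp
  also have "\<dots> = lookup f a" by simp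
  also have "\<dots> \<noteq> 0" using a by (simp add: in_keys_iff)
  finally show False using z by simp
qed


lemma lookup_mult_map: "lookup (mult_map d n m f) b = (if std_mon d n b then lookup (f * lin_form n ^ m) b else 0)"
  by (simp add: mult_map_def lookup_reduce)

lemma mult_map_add: "mult_map d n m (f + g) = mult_map d n m f + mult_map d n m g"
  by (rule poly_mapping_eqI) (simp add: lookup_mult_map lookup_add distrib_right)

lemma sc_mult: "sc c f * h = sc c (f * h)"
  by (simp add: sc_def mult_map_scale_conv_mult mult.assoc)

lemma mult_map_sc: "mult_map d n m (sc c f) = sc c (mult_map d n m f)"
  by (rule poly_mapping_eqI) (simp add: lookup_mult_map sc_mult)

lemma mult_map_zero[simp]: "mult_map d n m 0 = 0"
  by (rule poly_mapping_eqI) (simp add: lookup_mult_map)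

lemma mult_map_diff: "mult_map d n m (f - g) = mult_map d n m f - mult_map d n m (g :: 'k::comm_ring_1 mpoly)"
  using mult_map_add[of d n m "f - g" g] by (simp add: eq_diff_eq)

lemma subsp_image:
  "subsp (mult_map d n m ` (graded_piece d n i :: 'k::comm_ring_1 mpoly set))"
  unfolding subsp_def
proof (intro conjI ballI allI)
  show "0 \<in> mult_map d n m ` graded_piece d n i" by (rule image_eqI[of _ _ 0]) simp_all
next
  fix x y :: "'k mpoly" assume "x \<in> mult_map d n m ` graded_piece d n i" "y \<in> mult_map d n m ` graded_piece d n i"
  then obtain f g where "f \<in> graded_piece d n i" "g \<in> graded_piece d n i" "x = mult_map d n m f" "y = mult_map d n m g"
    by auto
  then show "x + y \<in> mult_map d n m ` graded_piece d n i"
    by (auto intro!: image_eqI[of _ _ "f + g"] simp: mult_map_add gp_add)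
next
  fix c and x :: "'k mpoly" assume "x \<in> mult_map d n m ` graded_piece d n i"
  then obtain f where "f \<in> graded_piece d n i" "x = mult_map d n m f" by auto
  then show "sc c x \<in> mult_map d n m ` graded_piece d n i"
    by (auto intro!: image_eqI[of _ _ "sc c f"] simp: mult_map_sc gp_sc)
qed

lemma keys_span:
  fixes V :: "'k::comm_ring_1 mpoly set"
  assumes "subsp V" "\<And>a. a \<in> S \<Longrightarrow> Poly_Mapping.single a 1 \<in> V" "keys f \<subseteq> S"
  shows "f \<in> V"
proof -
  have "f = (\<Sum>a\<in>keys f. sc (lookup f a) (Poly_Mapping.single a 1))"
    by (subst sum_singles) (simp add: single_sc[symmetric])
  also have "\<dots> \<in> V"
    by (rule subsp_sum[OF assms(1)]) (use assms in \<open>auto intro: subsp_sc[OF assms(1)]\<close>)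
  finally show ?thesis .
qed

lemma annih:
  fixes V :: "'k::field mpoly set"
  assumes "finite S"
  shows "subsp V \<Longrightarrow> \<forall>v\<in>V. keys v \<subseteq> S \<Longrightarrow> b0 \<in> S \<Longrightarrow> Poly_Mapping.single b0 1 \<notin> V \<Longrightarrow>
    \<exists>\<phi>. (\<exists>b\<in>S. \<phi> b \<noteq> 0) \<and> (\<forall>v\<in>V. (\<Sum>b\<in>S. \<phi> b * lookup v b) = 0)"
  using assms
proof (induction S arbitrary: V b0 rule: finite_induct)
  case empty then show ?case by simp
next
  case (insert b S')
  show ?case
  proof (cases "\<forall>v\<in>V. lookup v b = 0")
    case True
    let ?\<phi> = "\<lambda>x. if x = b then (1::'k) else 0"
    have "(\<Sum>x\<in>insert b S'. ?\<phi> x * lookup v x) = 0" if "v \<in> V" for v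
    proof -
      have "\<forall>x\<in>S'. ?\<phi> x * lookup v x = 0" using insert.hyps by auto
      then have "(\<Sum>x\<in>S'. ?\<phi> x * lookup v x) = 0" by (rule sum.neutral)
      then show ?thesis using insert.hyps True that by simp
    qed
    then show ?thesis by (intro exI[of _ ?\<phi>]) auto
  next
    case False
    then obtain v0 where v0: "v0 \<in> V" "lookup v0 b \<noteq> 0" by auto
    define w0 where "w0 = sc (inverse (lookup v0 b)) v0"
    have w0V: "w0 \<in> V" unfolding w0_def by (rule subsp_sc[OF insert.prems(1) v0(1)])
    have w0b: "lookup w0 b = 1" using v0(2) by (simp add: w0_def)
    define V' where "V' = (\<lambda>v. v - sc (lookup v b) w0) ` V"
    have V'V: "V' \<subseteq> V" unfolding V'_def
      using subsp_diff[OF insert.prems(1)] subsp_sc[OF insert.prems(1) w0V] by blast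
    have sV': "subsp V'"
      unfolding subsp_def
    proof (intro conjI ballI allI)
      show "0 \<in> V'" unfolding V'_def by (rule image_eqI[of _ _ 0]) (simp_all add: subsp_0[OF insert.prems(1)])
    next
      fix x y assume "x \<in> V'" "y \<in> V'"
      then obtain u1 u2 where "u1 \<in> V" "u2 \<in> V" "x = u1 - sc (lookup u1 b) w0" "y = u2 - sc (lookup u2 b) w0"
        by (auto simp: V'_def)
      then show "x + y \<in> V'" unfolding V'_def
        by (intro image_eqI[of _ _ "u1 + u2"]) (auto simp: lookup_add sc_add_left subsp_add[OF insert.prems(1)])
    next
      fix c x assume "x \<in> V'"
      then obtain u1 where "u1 \<in> V" "x = u1 - sc (lookup u1 b) w0" by (auto simp: V'_def)
      then show "sc c x \<in> V'" unfolding V'_def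
        by (intro image_eqI[of _ _ "sc c u1"]) (auto simp: sc_diff subsp_sc[OF insert.prems(1)])
    qed
    have kV': "\<forall>v\<in>V'. keys v \<subseteq> S'"
    proof
      fix x assume "x \<in> V'"
      then obtain u where u: "u \<in> V" "x = u - sc (lookup u b) w0" by (auto simp: V'_def)
      have "keys x \<subseteq> insert b S'"
      proof
        fix a assume "a \<in> keys x"
        then have "lookup u a \<noteq> 0 \<or> lookup w0 a \<noteq> 0" using u by (auto simp: in_keys_iff lookup_minus)
        then have "a \<in> keys u \<or> a \<in> keys w0" by (simp add: in_keys_iff)
        then show "a \<in> insert b S'" using insert.prems(2) u(1) w0V by blast
      qed
      moreover have "lookup x b = 0" using u w0b by (simp add: lookup_minus)
      ultimately show "keys x \<subseteq> S'" by (auto simp: in_keys_iff)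
    qed
    have "\<exists>b0'\<in>S'. Poly_Mapping.single b0' 1 \<notin> V'"
    proof (rule ccontr)
      assume "\<not> (\<exists>b0'\<in>S'. Poly_Mapping.single b0' 1 \<notin> V')"
      then have all: "\<And>a. a \<in> S' \<Longrightarrow> Poly_Mapping.single a 1 \<in> V'" by blast
      let ?x = "Poly_Mapping.single b0 1 - sc (lookup (Poly_Mapping.single b0 (1::'k)) b) w0"
      have "keys ?x \<subseteq> S'"
      proof
        fix a assume "a \<in> keys ?x"
        then have "lookup (Poly_Mapping.single b0 (1::'k)) a \<noteq> 0 \<or> lookup w0 a \<noteq> 0"
          by (auto simp: in_keys_iff lookup_minus)
        then have "a = b0 \<or> a \<in> keys w0" by (auto simp: in_keys_iff lookup_single when_def split: if_splits)
        then have "a \<in> insert b S'" using insert.prems(2,3) w0V by blast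
        moreover have "lookup ?x b = 0" using w0b by (simp add: lookup_minus)
        ultimately show "a \<in> S'" using \<open>a \<in> keys ?x\<close> by (auto simp: in_keys_iff)
      qed
      then have "?x \<in> V'" using keys_span[of V' S' ?x] sV' all by blast
      then have "?x \<in> V" using V'V by blast
      then have "?x + sc (lookup (Poly_Mapping.single b0 (1::'k)) b) w0 \<in> V"
        by (rule subsp_add[OF insert.prems(1)]) (rule subsp_sc[OF insert.prems(1) w0V])
      then show False using insert.prems(4) by simp
    qed
    then obtain b0' where b0': "b0' \<in> S'" "Poly_Mapping.single b0' 1 \<notin> V'" by blast
    from insert.IH[OF sV' kV' b0'] obtain \<phi>' where
      \<phi>': "\<exists>b\<in>S'. \<phi>' b \<noteq> 0" "\<forall>v\<in>V'. (\<Sum>b\<in>S'. \<phi>' b * lookup v b) = 0" by blast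
    define \<phi> where "\<phi> x = (if x = b then - (\<Sum>b'\<in>S'. \<phi>' b' * lookup w0 b') else \<phi>' x)" for x
    have "(\<Sum>x\<in>insert b S'. \<phi> x * lookup v x) = 0" if v: "v \<in> V" for v
    proof -
      have "(\<Sum>x\<in>insert b S'. \<phi> x * lookup v x) = \<phi> b * lookup v b + (\<Sum>x\<in>S'. \<phi>' x * lookup v x)"
        using insert.hyps by (simp add: \<phi>_def cong: sum.cong) (auto intro!: sum.cong)
      also have "\<dots> = (\<Sum>x\<in>S'. \<phi>' x * lookup (v - sc (lookup v b) w0) x)"
        by (simp add: \<phi>_def lookup_minus algebra_simps sum_subtractf sum_distrib_left sum_distrib_right)
      also have "\<dots> = 0" using \<phi>'(2) v unfolding V'_def by blast
      finally show ?thesis .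
    qed
    moreover have "\<exists>x\<in>insert b S'. \<phi> x \<noteq> 0"
      using \<phi>'(1) insert.hyps by (metis \<phi>_def insertCI)
    ultimately show ?thesis by blast
  qed
qed


definition cm :: "(nat \<Rightarrow> nat) \<Rightarrow> nat \<Rightarrow> (nat \<Rightarrow>\<^sub>0 nat) \<Rightarrow> (nat \<Rightarrow>\<^sub>0 nat)" where
  "cm d n a = Abs_poly_mapping (\<lambda>j. if j < n then d j - 1 - lookup a j else 0)"

lemma lookup_cm: "lookup (cm d n a) j = (if j < n then d j - 1 - lookup a j else 0)"
proof -
  have "finite {j. (if j < n then d j - 1 - lookup a j else 0) \<noteq> 0}"
    by (rule finite_subset[of _ "{..<n}"]) auto
  then show ?thesis unfolding cm_def by simp
qed

lemma std_cm: "(\<forall>j<n. 0 < d j) \<Longrightarrow> std_mon d n (cm d n a)"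
  unfolding std_mon_def by (auto simp: lookup_cm in_keys_iff split: if_splits)

lemma cm_cm: "std_mon d n a \<Longrightarrow> cm d n (cm d n a) = a"
  by (rule poly_mapping_eqI) (auto simp: lookup_cm std_mon_def in_keys_iff)

lemma mon_deg_std: "std_mon d n a \<Longrightarrow> mon_deg a = (\<Sum>j<n. lookup a j)"
  by (rule mon_deg_alt) (auto simp: std_mon_def)

lemma std_out: "std_mon d n a \<Longrightarrow> \<not> j < n \<Longrightarrow> lookup a j = 0"
  unfolding std_mon_def by (auto simp: in_keys_iff)

lemma std_le: "std_mon d n a \<Longrightarrow> j < n \<Longrightarrow> lookup a j \<le> d j - 1"
  unfolding std_mon_def by (metis Suc_pred' less_Suc_eq_le gr_implies_not0 not_gr0)

lemma mon_deg_le_t: "std_mon d n a \<Longrightarrow> mon_deg a \<le> (\<Sum>j<n. d j - 1)"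
proof -
  assume a: "std_mon d n a"
  have "(\<Sum>j<n. lookup a j) \<le> (\<Sum>j<n. d j - 1)" by (rule sum_mono) (rule std_le[OF a], simp)
  then show ?thesis using mon_deg_std[OF a] by simp
qed

lemma mon_deg_cm: "std_mon d n a \<Longrightarrow> mon_deg (cm d n a) = (\<Sum>j<n. d j - 1) - mon_deg a"
proof -
  assume a: "std_mon d n a"
  have "mon_deg (cm d n a) = (\<Sum>j<n. lookup (cm d n a) j)"
    by (rule mon_deg_alt) (auto simp: lookup_cm in_keys_iff split: if_splits)
  also have "\<dots> = (\<Sum>j<n. (d j - 1) - lookup a j)" by (simp add: lookup_cm)
  also have "\<dots> = (\<Sum>j<n. d j - 1) - (\<Sum>j<n. lookup a j)"
    by (rule sum_subtractf_nat) (use a in \<open>auto simp: std_mon_def\<close>)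
  finally show ?thesis using mon_deg_std[OF a] by simp
qed

lemma inj_cm: "inj_on (cm d n) {a. std_mon d n a}"
  by (rule inj_onI) (metis cm_cm mem_Collect_eq)

lemma le_cw_cm: assumes a: "std_mon d n a" and b: "std_mon d n b"
  shows "le_cw (cm d n b) (cm d n a) \<longleftrightarrow> le_cw a b"
proof -
  have "lookup (cm d n b) j \<le> lookup (cm d n a) j \<longleftrightarrow> lookup a j \<le> lookup b j" for j
  proof (cases "j < n")
    case True
    then show ?thesis using std_le[OF a True] std_le[OF b True] by (simp add: lookup_cm; linarith)
  next
    case False
    then show ?thesis using std_out[OF a False] std_out[OF b False] by (simp add: lookup_cm)
  qed
  then show ?thesis unfolding le_cw_def by blast
qed

lemma diff_cm: assumes a: "std_mon d n a" and b: "std_mon d n b" and ab: "le_cw a b"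
  shows "cm d n a - cm d n b = b - a"
proof (rule poly_mapping_eqI)
  fix j
  show "lookup (cm d n a - cm d n b) j = lookup (b - a) j"
  proof (cases "j < n")
    case True
    then show ?thesis using std_le[OF a True] std_le[OF b True] ab
      by (simp add: lookup_cm lookup_minus le_cw_def)
  next
    case False
    then show ?thesis using std_out[OF a False] std_out[OF b False] by (simp add: lookup_cm lookup_minus)
  qed
qed


theorem surj_dual:
  fixes d :: "nat \<Rightarrow> nat" and n m i :: nat
  assumes dpos: "\<forall>j<n. 0 < d j"
    and inj: "i + m \<le> (\<Sum>j<n. d j - 1) \<Longrightarrow> \<forall>g\<in>graded_piece d n ((\<Sum>j<n. d j - 1) - (i + m)).
                mult_map d n m g = (0::'k::field mpoly) \<longrightarrow> g = 0"
  shows "mult_map d n m ` (graded_piece d n i :: 'k mpoly set) = graded_piece d n (i + m)"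
proof
  show "mult_map d n m ` (graded_piece d n i :: 'k mpoly set) \<subseteq> graded_piece d n (i + m)"
    using mult_map_gp by blast
  let ?V = "mult_map d n m ` (graded_piece d n i :: 'k mpoly set)"
  let ?t = "\<Sum>j<n. d j - 1"
  let ?S = "{b. std_mon d n b \<and> mon_deg b = i + m}"
  show "graded_piece d n (i + m) \<subseteq> ?V"
  proof (rule ccontr)
    assume nsub: "\<not> graded_piece d n (i + m) \<subseteq> ?V"
    have finS: "finite ?S" by (rule finite_subset[OF _ finite_std[of d n]]) auto
    have sV: "subsp ?V" by (rule subsp_image)
    have kV: "\<forall>v\<in>?V. keys v \<subseteq> ?S"
    proof
      fix v assume "v \<in> ?V"
      then have "v \<in> graded_piece d n (i + m)" using mult_map_gp by blast
      then show "keys v \<subseteq> ?S" by (auto simp: graded_piece_def)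
    qed
    have "\<exists>b0\<in>?S. Poly_Mapping.single b0 1 \<notin> ?V"
    proof (rule ccontr)
      assume "\<not> (\<exists>b0\<in>?S. Poly_Mapping.single b0 1 \<notin> ?V)"
      then have "mons d n (i + m) \<subseteq> ?V" by (auto simp: mons_def)
      then have "graded_piece d n (i + m) \<subseteq> ?V" by (rule gp_span[OF sV])
      with nsub show False by simp
    qed
    then obtain b0 where b0: "b0 \<in> ?S" "Poly_Mapping.single b0 1 \<notin> ?V" by blast
    obtain \<phi> where \<phi>: "\<exists>b\<in>?S. \<phi> b \<noteq> 0" "\<forall>v\<in>?V. (\<Sum>b\<in>?S. \<phi> b * lookup v b) = 0"
      using annih[OF finS sV kV b0] by blast
    have imt: "i + m \<le> ?t" using b0(1) mon_deg_le_t[of d n b0] by simp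
    define g where "g = (\<Sum>b\<in>?S. Poly_Mapping.single (cm d n b) (\<phi> b))"
    have injS: "inj_on (cm d n) ?S" by (rule inj_on_subset[OF inj_cm]) auto
    have lg: "lookup g (cm d n b) = \<phi> b" if "b \<in> ?S" for b
    proof -
      have "lookup g (cm d n b) = (\<Sum>b'\<in>?S. if b' = b then \<phi> b' else 0)"
        unfolding g_def lookup_sum
      proof (rule sum.cong[OF refl])
        fix b' assume "b' \<in> ?S"
        then have "cm d n b' = cm d n b \<longleftrightarrow> b' = b" using injS that by (meson inj_on_eq_iff)
        then show "lookup (Poly_Mapping.single (cm d n b') (\<phi> b')) (cm d n b) = (if b' = b then \<phi> b' else 0)"
          by (simp add: lookup_single when_def)
      qed
      also have "\<dots> = \<phi> b" using that finS by simp
      finally show ?thesis .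
    qed
    have lg0: "lookup g c = 0" if "c \<notin> cm d n ` ?S" for c
      unfolding g_def lookup_sum using that by (auto simp: lookup_single when_def intro!: sum.neutral)
    have kg: "keys g \<subseteq> cm d n ` ?S" using lg0 by (auto simp: in_keys_iff)
    have gG: "g \<in> graded_piece d n (?t - (i + m))"
      unfolding gp_iff
    proof (intro allI impI)
      fix c assume "lookup g c \<noteq> 0"
      then obtain b where "b \<in> ?S" "c = cm d n b" using lg0 by blast
      then show "std_mon d n c \<and> mon_deg c = ?t - (i + m)"
        using std_cm[OF dpos] mon_deg_cm by auto
    qed
    have gnz: "g \<noteq> 0"
    proof -
      obtain b1 where "b1 \<in> ?S" "\<phi> b1 \<noteq> 0" using \<phi>(1) by blast
      then have "lookup g (cm d n b1) \<noteq> 0" using lg by simp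
      then show ?thesis by auto
    qed
    have "mult_map d n m g = 0"
    proof (rule poly_mapping_eqI)
      fix c
      show "lookup (mult_map d n m g) c = lookup 0 c"
      proof (rule ccontr)
        assume nz: "lookup (mult_map d n m g) c \<noteq> lookup 0 c"
        have mg: "mult_map d n m g \<in> graded_piece d n (?t - (i + m) + m)" by (rule mult_map_gp[OF gG])
        then have sc: "std_mon d n c" and dc: "mon_deg c = ?t - i" using nz imt by (auto simp: gp_iff)
        define a where "a = cm d n c"
        have sa: "std_mon d n a" unfolding a_def by (rule std_cm[OF dpos])
        have ca: "cm d n a = c" unfolding a_def by (rule cm_cm[OF sc])
        have da: "mon_deg a = i" unfolding a_def using mon_deg_cm[OF sc] dc mon_deg_le_t[OF sc] imt by simp
        have "lookup (mult_map d n m g) c = lookup (g * lin_form n ^ m) c"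
          using sc by (simp add: lookup_mult_map)
        also have "\<dots> = (\<Sum>x\<in>keys g. lookup g x * (if le_cw x c then lookup (lin_form n ^ m) (c - x) else 0))"
          by (rule lookup_mult_sum)
        also have "\<dots> = (\<Sum>x\<in>cm d n ` ?S. lookup g x * (if le_cw x c then lookup (lin_form n ^ m) (c - x) else 0))"
          by (rule sum.mono_neutral_left) (use kg finS in \<open>auto simp: in_keys_iff\<close>)
        also have "\<dots> = (\<Sum>b\<in>?S. lookup g (cm d n b) * (if le_cw (cm d n b) c then lookup (lin_form n ^ m) (c - cm d n b) else 0))"
          by (rule sum.reindex[OF injS, unfolded comp_def])
        also have "\<dots> = (\<Sum>b\<in>?S. \<phi> b * lookup (mult_map d n m (Poly_Mapping.single a 1)) b)"
        proof (rule sum.cong[OF refl])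
          fix b assume b: "b \<in> ?S"
          then have sb: "std_mon d n b" by simp
          have "le_cw (cm d n b) c \<longleftrightarrow> le_cw a b" unfolding ca[symmetric] by (rule le_cw_cm[OF sa sb])
          moreover have "le_cw a b \<Longrightarrow> c - cm d n b = b - a" unfolding ca[symmetric] by (rule diff_cm[OF sa sb])
          ultimately show "lookup g (cm d n b) * (if le_cw (cm d n b) c then lookup (lin_form n ^ m) (c - cm d n b) else 0)
              = \<phi> b * lookup (mult_map d n m (Poly_Mapping.single a 1)) b"
            using lg[OF b] sb by (simp add: lookup_mult_map lookup_single_mult)
        qed
        also have "\<dots> = 0"
        proof -
          have "Poly_Mapping.single a 1 \<in> graded_piece d n i" by (rule gp_single[OF sa da])
          then have "mult_map d n m (Poly_Mapping.single a 1) \<in> ?V" by blast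
          then show ?thesis using \<phi>(2) by blast
        qed
        finally show False using nz by simp
      qed
    qed
    then show False using inj[OF imt] gG gnz by blast
  qed
qed


theorem theorem2p7:
  fixes p n m :: nat and d :: "nat \<Rightarrow> nat"
  assumes "CHAR('k::field) = p" and "p > 0"
    and "\<forall>j<n. d j > 0"
    and "(\<Sum>j<n. d j - 1) + m < 2 * Max (insert p (d ` {..<n}))"
  shows "\<forall>i. maximal_rank (mult_map d n m :: 'k mpoly \<Rightarrow> 'k mpoly)
                 (graded_piece d n i) (graded_piece d n (i + m))"
proof
  fix i
  let ?t = "\<Sum>j<n. d j - 1"
  let ?Mx = "Max (insert p (d ` {..<n}))"
  have Mx: "?Mx \<in> insert p (d ` {..<n})" by (rule Max_in) auto
  have injall: "f = 0" if "2*i'+m \<le> ?t" "f \<in> graded_piece d n i'" "mult_map d n m f = (0::'k mpoly)" for i' f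
  proof -
    have im: "i' + m < ?Mx" using that(1) assms(4) by linarith
    have z: "(lam d n ^^ m) f = 0" using that(3) mult_map_pow[OF that(2)] by simp
    show ?thesis
    proof (cases "?Mx = p")
      case True
      have "p - 1 < CHAR('k)" using assms(1,2) by simp
      moreover have "i' + m \<le> p - 1" using im True by linarith
      ultimately show ?thesis using injlef[of "p - 1" n d f i' m] assms(3) that(1,2) z by blast
    next
      case False
      then obtain j where "j < n" "?Mx = d j" using Mx by auto
      then show ?thesis using caseD_inj[of j n f d i' m] that(2) im z by simp
    qed
  qed
  show "maximal_rank (mult_map d n m :: 'k mpoly \<Rightarrow> 'k mpoly) (graded_piece d n i) (graded_piece d n (i + m))"
  proof (cases "2*i+m \<le> ?t")
    case True
    have "inj_on (mult_map d n m :: 'k mpoly \<Rightarrow> 'k mpoly) (graded_piece d n i)"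
    proof (rule inj_onI)
      fix f g :: "'k mpoly" assume fg: "f \<in> graded_piece d n i" "g \<in> graded_piece d n i"
        "mult_map d n m f = mult_map d n m g"
      then have "mult_map d n m (f - g) = 0" by (simp add: mult_map_diff)
      then have "f - g = 0" using injall[OF True gp_diff[OF fg(1,2)]] by simp
      then show "f = g" by simp
    qed
    then show ?thesis unfolding maximal_rank_def by (rule disjI1)
  next
    case False
    have "mult_map d n m ` (graded_piece d n i :: 'k mpoly set) = graded_piece d n (i + m)"
    proof (rule surj_dual[OF assms(3)])
      assume "i + m \<le> ?t"
      then have "2 * (?t - (i + m)) + m \<le> ?t" using False by linarith
      then show "\<forall>g\<in>graded_piece d n (?t - (i + m)). mult_map d n m g = (0::'k mpoly) \<longrightarrow> g = 0"
        using injall by blast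
    qed
    then show ?thesis unfolding maximal_rank_def by (rule disjI2)
  qed
qed


end
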